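(* Let $\mathcal{T}=(\mathcal{V},\mathcal{E})$ obey the LC-PF model and covariance assumption of the context, with $\Omega_p(c,c)+\Omega_q(c,c)>0$ for every non-root node $c$. Let $\mathcal{M}\subset\mathcal{V}$ be a set of non-root ("missing") nodes, each of degree at most $2$ in $\mathcal{T}$, and let $\mathcal{O}=\mathcal{V}\setminus\mathcal{M}$ be the observed nodes. Let $\mathcal{T}_{\mathcal{M}}$ be the minimum weight spanning tree of the complete graph on $\mathcal{O}$ with edge weights $\phi_{ab}$. Then every edge of $\mathcal{T}$ joining two observed nodes is an edge of $\mathcal{T}_{\mathcal{M}}$. Every other (spurious) edge of $\mathcal{T}_{\mathcal{M}}$ joins two observed nodes that are separated in $\mathcal{T}$ by missing nodes, i.e. whose connecting path in $\mathcal{T}$ has all interior nodes in $\mathcal{M}$.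
   Context: $\mathcal{T}=(\mathcal{V},\mathcal{E})$ is a tree with a distinguished root node (the substation) of degree one. Each edge $(ab)$ has resistance $r_{ab}>0$ and reactance $x_{ab}>0$. Let $H_{1/r}$ (resp. $H_{1/x}$) be the weighted Laplacian of $\mathcal{T}$ with edge weights $1/r_{ab}$ (resp. $1/x_{ab}$), with the root row and column removed. Non-root nodes have random injections $p_a,q_a$. The LC-PF model gives the voltage magnitude deviations $v=H_{1/r}^{-1}p+H_{1/x}^{-1}q$ and phases $\theta=H_{1/x}^{-1}p-H_{1/r}^{-1}q$ at non-root nodes; the root voltage is constant. Covariance assumption: with $\Omega_p,\Omega_q$ the covariances of $p,q$ and $\Omega_{pq}=\mathbb{E}[(p-\mathbb{E}p)(q-\mathbb{E}q)^T]=\Omega_{qp}^T$, for distinct non-root $a,b$ we have $\Omega_p(a,b)=\Omega_q(a,b)=\Omega_{qp}(a,b)=0$, and $\Omega_{qp}(a,a)\ge0$. Define $\phi_{ab}=\mathbb{E}[((v_a-\mathbb{E}v_a)-(v_b-\mathbb{E}v_b))^2]$. *)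

theory Defs
  imports "HOL-Probability.Probability"
begin

text \<open>An undirected graph on a vertex set V is a symmetric, irreflexive relation
  E within V x V; each undirected edge {a,b} is represented by both (a,b) and (b,a).\<close>

definition ugraph :: "'v set \<Rightarrow> ('v \<times> 'v) set \<Rightarrow> bool" where
  "ugraph V E \<longleftrightarrow> E \<subseteq> V \<times> V \<and> sym E \<and> (\<forall>a. (a, a) \<notin> E)"

definition connected_on :: "'v set \<Rightarrow> ('v \<times> 'v) set \<Rightarrow> bool" where
  "connected_on V E \<longleftrightarrow> (\<forall>a\<in>V. \<forall>b\<in>V. (a, b) \<in> E\<^sup>*)"

text \<open>A tree: finite, nonempty, connected, with |V|-1 undirected edges
  (each counted twice as ordered pairs).\<close>
definition is_tree :: "'v set \<Rightarrow> ('v \<times> 'v) set \<Rightarrow> bool" where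
  "is_tree V E \<longleftrightarrow> finite V \<and> V \<noteq> {} \<and> ugraph V E \<and> connected_on V E
     \<and> card E = 2 * (card V - 1)"

definition degree :: "('v \<times> 'v) set \<Rightarrow> 'v \<Rightarrow> nat" where
  "degree E a = card {b. (a, b) \<in> E}"

definition is_path :: "('v \<times> 'v) set \<Rightarrow> 'v list \<Rightarrow> bool" where
  "is_path E xs \<longleftrightarrow> xs \<noteq> [] \<and> distinct xs \<and>
     (\<forall>i. Suc i < length xs \<longrightarrow> (xs ! i, xs ! Suc i) \<in> E)"

definition separated_by :: "('v \<times> 'v) set \<Rightarrow> 'v set \<Rightarrow> 'v \<Rightarrow> 'v \<Rightarrow> bool" where
  "separated_by E S a b \<longleftrightarrow> (\<exists>xs. is_path E xs \<and> hd xs = a \<and> last xs = b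
     \<and> set (butlast (tl xs)) \<subseteq> S)"

text \<open>Minimum weight spanning tree of the complete graph on O, weights w a b
  (summing over ordered pairs counts each undirected edge twice, which does not
  change the minimisers).\<close>
definition is_mst :: "'v set \<Rightarrow> ('v \<Rightarrow> 'v \<Rightarrow> real) \<Rightarrow> ('v \<times> 'v) set \<Rightarrow> bool" where
  "is_mst Ob w F \<longleftrightarrow> is_tree Ob F \<and>
     (\<forall>F'. is_tree Ob F' \<longrightarrow> (\<Sum>(a, b)\<in>F. w a b) \<le> (\<Sum>(a, b)\<in>F'. w a b))"

text \<open>Weighted Laplacian entries (weights wt a b on edges); restricting to the
  non-rt nodes removes the rt row and column.\<close>
definition lap :: "('v \<times> 'v) set \<Rightarrow> ('v \<Rightarrow> 'v \<Rightarrow> real) \<Rightarrow> 'v \<Rightarrow> 'v \<Rightarrow> real" where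
  "lap E wt a b = (if a = b then (\<Sum>c\<in>{c. (a, c) \<in> E}. wt a c)
                   else if (a, b) \<in> E then - wt a b else 0)"

definition mat_inv_on :: "'v set \<Rightarrow> ('v \<Rightarrow> 'v \<Rightarrow> real) \<Rightarrow> 'v \<Rightarrow> 'v \<Rightarrow> real" where
  "mat_inv_on N H = (THE G. (\<forall>a\<in>N. \<forall>b\<in>N. (\<Sum>c\<in>N. H a c * G c b) = (if a = b then 1 else 0))
                         \<and> (\<forall>a b. a \<notin> N \<or> b \<notin> N \<longrightarrow> G a b = 0))"

definition covar :: "'w measure \<Rightarrow> ('w \<Rightarrow> real) \<Rightarrow> ('w \<Rightarrow> real) \<Rightarrow> real" where
  "covar M X Y = (\<integral>\<omega>. (X \<omega> - (\<integral>\<omega>'. X \<omega>' \<partial>M)) * (Y \<omega> - (\<integral>\<omega>'. Y \<omega>' \<partial>M)) \<partial>M)"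

text \<open>Voltage magnitude deviation v = H_{1/r}^{-1} p + H_{1/x}^{-1} q at non-rt nodes;
  the rt voltage is constant (taken as 0, which does not affect phi).\<close>
definition volt :: "'v set \<Rightarrow> 'v \<Rightarrow> ('v \<times> 'v) set \<Rightarrow> ('v \<Rightarrow> 'v \<Rightarrow> real) \<Rightarrow> ('v \<Rightarrow> 'v \<Rightarrow> real)
     \<Rightarrow> ('v \<Rightarrow> 'w \<Rightarrow> real) \<Rightarrow> ('v \<Rightarrow> 'w \<Rightarrow> real) \<Rightarrow> 'v \<Rightarrow> 'w \<Rightarrow> real" where
  "volt V rt E r x p q a \<omega> =
     (if a \<in> V - {rt} then
        (\<Sum>b\<in>V - {rt}. mat_inv_on (V - {rt}) (lap E (\<lambda>c d. 1 / r c d)) a b * p b \<omega>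
                        + mat_inv_on (V - {rt}) (lap E (\<lambda>c d. 1 / x c d)) a b * q b \<omega>)
      else 0)"

definition phi :: "'v set \<Rightarrow> 'v \<Rightarrow> ('v \<times> 'v) set \<Rightarrow> ('v \<Rightarrow> 'v \<Rightarrow> real) \<Rightarrow> ('v \<Rightarrow> 'v \<Rightarrow> real)
     \<Rightarrow> 'w measure \<Rightarrow> ('v \<Rightarrow> 'w \<Rightarrow> real) \<Rightarrow> ('v \<Rightarrow> 'w \<Rightarrow> real) \<Rightarrow> 'v \<Rightarrow> 'v \<Rightarrow> real" where
  "phi V rt E r x M p q a b =
     (let va = volt V rt E r x p q a; vb = volt V rt E r x p q b in
      \<integral>\<omega>. ((va \<omega> - (\<integral>\<omega>'. va \<omega>' \<partial>M)) - (vb \<omega> - (\<integral>\<omega>'. vb \<omega>' \<partial>M)))\<^sup>2 \<partial>M)"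

end

theory Submission
  imports Defs
begin

lemma sym_rtrancl_rev:
  assumes "sym R" "(x,y) \<in> R\<^sup>*" shows "(y,x) \<in> R\<^sup>*"
  using assms by (meson sym_rtrancl symD)

lemma rtrancl_in_set:
  assumes "R \<subseteq> Ob \<times> Ob" "(u,c) \<in> R\<^sup>*" "c \<in> Ob" shows "u \<in> Ob"
  using assms(2,3) proof (induction rule: converse_rtrancl_induct)
  case base then show ?case by simp
next
  case (step y z) then show ?case using assms(1) by auto
qed

lemma reach_remove_edge:
  assumes "(c,v) \<in> F\<^sup>*"
  shows "(c,v) \<in> (F - {(c,d),(d,c)})\<^sup>* \<or> (d,v) \<in> (F - {(c,d),(d,c)})\<^sup>*"
  using assms
proof (induction rule: rtrancl_induct)
  case base then show ?case by simp
next
  case (step y z)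
  show ?case
  proof (cases "(y,z) \<in> {(c,d),(d,c)}")
    case True then show ?thesis by auto
  next
    case False
    then have "(y,z) \<in> F - {(c,d),(d,c)}" using step by auto
    with step.IH show ?thesis by (meson rtrancl.rtrancl_into_rtrancl)
  qed
qed

definition Pset :: "'v set \<Rightarrow> 'v \<Rightarrow> ('v \<Rightarrow> 'v) \<Rightarrow> ('v \<times> 'v) set" where
  "Pset V r par = (\<lambda>v. (v, par v)) ` (V - {r}) \<union> (\<lambda>v. (par v, v)) ` (V - {r})"

lemma card_Pset:
  assumes "finite V" "\<forall>v\<in>V-{r}. dep v = Suc (dep (par v))" "r \<in> V"
  shows "card (Pset V r par) = 2 * (card V - 1)"
proof -
  have i1: "inj_on (\<lambda>v. (v, par v)) (V - {r})" by (auto simp: inj_on_def)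
  have i2: "inj_on (\<lambda>v. (par v, v)) (V - {r})" by (auto simp: inj_on_def)
  have d: "(\<lambda>v. (v, par v)) ` (V - {r}) \<inter> (\<lambda>v. (par v, v)) ` (V - {r}) = {}"
  proof -
    { fix u v assume "u \<in> V - {r}" "v \<in> V - {r}" "(u, par u) = (par v, v)"
      then have "u = par v" "par u = v" by auto
      moreover have "dep u = Suc (dep (par u))" "dep v = Suc (dep (par v))"
        using assms(2) \<open>u \<in> V - {r}\<close> \<open>v \<in> V - {r}\<close> by blast+
      ultimately have False by simp }
    then show ?thesis by blast
  qed
  have "card (Pset V r par) = card ((\<lambda>v. (v, par v)) ` (V - {r})) + card ((\<lambda>v. (par v, v)) ` (V - {r}))"
    unfolding Pset_def using assms(1) d by (simp add: card_Un_disjoint)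
  also have "\<dots> = 2 * card (V - {r})" using card_image[OF i1] card_image[OF i2] by simp
  also have "\<dots> = 2 * (card V - 1)" using assms by simp
  finally show ?thesis .
qed

lemma parent_exists:
  assumes fin: "finite V" and ug: "ugraph V E" and con: "connected_on V E" and r: "r \<in> V"
  shows "\<exists>par dep. par r = r \<and> dep r = (0::nat) \<and>
           (\<forall>v\<in>V-{r}. par v \<in> V \<and> (v, par v) \<in> E \<and> dep v = Suc (dep (par v)))"
proof -
  define dep where "dep v = (LEAST n. (r,v) \<in> E^^n)" for v
  have ex: "\<exists>n. (r,v) \<in> E^^n" if "v \<in> V" for v
    using con r that unfolding connected_on_def by (meson rtrancl_imp_relpow)
  have dep_in: "(r,v) \<in> E^^(dep v)" if "v \<in> V" for v
    unfolding dep_def using ex[OF that] by (rule LeastI_ex)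
  have dep_le: "dep v \<le> n" if "(r,v) \<in> E^^n" for v n
    unfolding dep_def using that by (rule Least_le)
  have dep_r: "dep r = 0" using dep_le[of r 0] by simp
  have par_ex: "\<exists>u. u \<in> V \<and> (v,u) \<in> E \<and> dep v = Suc (dep u)" if v: "v \<in> V - {r}" for v
  proof -
    have h: "(r,v) \<in> E^^(dep v)" using dep_in v by auto
    have "dep v \<noteq> 0"
    proof
      assume "dep v = 0" with h have "(r,v) \<in> E^^0" by simp
      then show False using v by simp
    qed
    then obtain m where m: "dep v = Suc m" by (cases "dep v") auto
    with h obtain u where u: "(r,u) \<in> E^^m" "(u,v) \<in> E" by (auto elim: relpow_Suc_E)
    have uV: "u \<in> V" using u(2) ug unfolding ugraph_def by auto
    have "dep u \<le> m" using dep_le u(1) by blast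
    moreover have "(r,v) \<in> E^^(Suc (dep u))" using dep_in[OF uV] u(2) by (rule relpow_Suc_I)
    then have "dep v \<le> Suc (dep u)" using dep_le by blast
    ultimately have "dep v = Suc (dep u)" using m by simp
    moreover have "(v,u) \<in> E" using u(2) ug unfolding ugraph_def by (auto dest: symD)
    ultimately show ?thesis using uV by blast
  qed
  define par where "par v = (if v = r then r else (SOME u. u \<in> V \<and> (v,u) \<in> E \<and> dep v = Suc (dep u)))" for v
  have "\<forall>v\<in>V-{r}. par v \<in> V \<and> (v, par v) \<in> E \<and> dep v = Suc (dep (par v))"
  proof
    fix v assume v: "v \<in> V - {r}"
    then have "par v = (SOME u. u \<in> V \<and> (v,u) \<in> E \<and> dep v = Suc (dep u))" unfolding par_def by auto
    then show "par v \<in> V \<and> (v, par v) \<in> E \<and> dep v = Suc (dep (par v))"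
      using someI_ex[OF par_ex[OF v]] by simp
  qed
  moreover have "par r = r" unfolding par_def by simp
  ultimately show ?thesis using dep_r by blast
qed

lemma ugraph_finite: "finite V \<Longrightarrow> ugraph V E \<Longrightarrow> finite E"
  unfolding ugraph_def by (meson finite_SigmaI finite_subset)

lemma card_lower:
  assumes fin: "finite V" and ug: "ugraph V E" and con: "connected_on V E" and ne: "V \<noteq> {}"
  shows "2 * (card V - 1) \<le> card E"
proof -
  obtain r where r: "r \<in> V" using ne by auto
  from parent_exists[OF fin ug con r] obtain par and dep :: "'a \<Rightarrow> nat" where
    pd: "par r = r" "dep r = 0" "\<forall>v\<in>V-{r}. par v \<in> V \<and> (v, par v) \<in> E \<and> dep v = Suc (dep (par v))"
    by blast
  have "Pset V r par \<subseteq> E" using pd(3) ug unfolding Pset_def ugraph_def by (auto dest: symD)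
  then have "card (Pset V r par) \<le> card E" using ugraph_finite[OF fin ug] by (simp add: card_mono)
  moreover have "card (Pset V r par) = 2 * (card V - 1)"
    using card_Pset[of V r dep par] fin r pd(3) by blast
  ultimately show ?thesis by simp
qed

lemma tree_bridge:
  assumes T: "is_tree Ob F" and cd: "(c,d) \<in> F"
  shows "(c,d) \<notin> (F - {(c,d),(d,c)})\<^sup>*"
proof
  let ?F0 = "F - {(c,d),(d,c)}"
  assume cd0: "(c,d) \<in> ?F0\<^sup>*"
  from T have fin: "finite Ob" and ug: "ugraph Ob F" and con: "connected_on Ob F"
    and cardF: "card F = 2*(card Ob - 1)" and ne: "Ob \<noteq> {}" unfolding is_tree_def by blast+
  have symF0: "sym ?F0" using ug unfolding ugraph_def sym_def by auto
  have cO: "c \<in> Ob" "d \<in> Ob" using ug cd unfolding ugraph_def by auto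
  have cnd: "c \<noteq> d" using ug cd unfolding ugraph_def by auto
  have dc: "(d,c) \<in> F" using ug cd unfolding ugraph_def by (auto dest: symD)
  have reach: "(c,v) \<in> ?F0\<^sup>*" if "v \<in> Ob" for v
  proof -
    have "(c,v) \<in> F\<^sup>*" using con cO that unfolding connected_on_def by auto
    from reach_remove_edge[OF this, of d] show ?thesis using cd0 by (meson rtrancl_trans)
  qed
  have "connected_on Ob ?F0" unfolding connected_on_def
    using reach sym_rtrancl_rev[OF symF0] by (meson rtrancl_trans)
  moreover have "ugraph Ob ?F0" using ug unfolding ugraph_def sym_def by auto
  ultimately have "2 * (card Ob - 1) \<le> card ?F0" using card_lower fin ne by blast
  moreover have "card ?F0 = card F - 2"
    using cd dc cnd ugraph_finite[OF fin ug] by (simp add: card_Diff_subset)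
  moreover have "card F \<ge> 2"
  proof -
    have "{(c,d),(d,c)} \<subseteq> F" using cd dc by auto
    then have "card {(c,d),(d,c)} \<le> card F" using ugraph_finite[OF fin ug] by (simp add: card_mono)
    then show ?thesis using cnd by simp
  qed
  ultimately show False using cardF by linarith
qed

lemma exchange:
  fixes w :: "'v \<Rightarrow> 'v \<Rightarrow> real"
  assumes T: "is_tree Ob F" and cd: "(c,d) \<in> F"
    and uc: "(u,c) \<in> (F - {(c,d),(d,c)})\<^sup>*" and vd: "(v,d) \<in> (F - {(c,d),(d,c)})\<^sup>*"
    and wsym: "\<And>x y. w x y = w y x" and lt: "w u v < w c d"
  shows "\<exists>F'. is_tree Ob F' \<and> (\<Sum>(a,b)\<in>F'. w a b) < (\<Sum>(a,b)\<in>F. w a b)"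
proof -
  let ?F0 = "F - {(c,d),(d,c)}"
  define F' where "F' = insert (u,v) (insert (v,u) ?F0)"
  from T have fin: "finite Ob" and ug: "ugraph Ob F" and con: "connected_on Ob F"
    and cardF: "card F = 2*(card Ob - 1)" and ne: "Ob \<noteq> {}" unfolding is_tree_def by blast+
  have finF: "finite F" using ugraph_finite[OF fin ug] .
  have symF0: "sym ?F0" using ug unfolding ugraph_def sym_def by auto
  have cO: "c \<in> Ob" "d \<in> Ob" using ug cd unfolding ugraph_def by auto
  have cnd: "c \<noteq> d" using ug cd unfolding ugraph_def by auto
  have dc: "(d,c) \<in> F" using ug cd unfolding ugraph_def by (auto dest: symD)
  have br: "(c,d) \<notin> ?F0\<^sup>*" using tree_bridge[OF T cd] .
  have cu: "(c,u) \<in> ?F0\<^sup>*" using sym_rtrancl_rev[OF symF0 uc] .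
  have dv: "(d,v) \<in> ?F0\<^sup>*" using sym_rtrancl_rev[OF symF0 vd] .
  have F0O: "?F0 \<subseteq> Ob \<times> Ob" using ug unfolding ugraph_def by auto
  have uO: "u \<in> Ob" using rtrancl_in_set[OF F0O uc cO(1)] .
  have vO: "v \<in> Ob" using rtrancl_in_set[OF F0O vd cO(2)] .
  have unv: "u \<noteq> v"
  proof
    assume "u = v" then have "(c,d) \<in> ?F0\<^sup>*" using cu vd by (meson rtrancl_trans)
    then show False using br by blast
  qed
  have uv0: "(u,v) \<notin> ?F0"
  proof
    assume "(u,v) \<in> ?F0" then have "(c,d) \<in> ?F0\<^sup>*" using cu vd
      by (meson rtrancl_trans r_into_rtrancl)
    then show False using br by blast
  qed
  have vu0: "(v,u) \<notin> ?F0" using uv0 symF0 by (auto dest: symD)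
  have treeF': "is_tree Ob F'"
    unfolding is_tree_def
  proof (intro conjI)
    show "finite Ob" "Ob \<noteq> {}" by fact+
    show "ugraph Ob F'" using ug uO vO unv unfolding ugraph_def F'_def sym_def by auto
    have sub: "?F0 \<subseteq> F'" unfolding F'_def by auto
    have symF': "sym F'" using symF0 unfolding F'_def sym_def by auto
    have dc': "(d,c) \<in> F'\<^sup>*"
    proof -
      have "(d,v) \<in> F'\<^sup>*" using dv rtrancl_mono[OF sub] by blast
      moreover have "(v,u) \<in> F'\<^sup>*" unfolding F'_def by auto
      moreover have "(u,c) \<in> F'\<^sup>*" using uc rtrancl_mono[OF sub] by blast
      ultimately show ?thesis by (meson rtrancl_trans)
    qed
    have toc: "(z,c) \<in> F'\<^sup>*" if "z \<in> Ob" for z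
    proof -
      have "(c,z) \<in> F\<^sup>*" using con cO that unfolding connected_on_def by auto
      from reach_remove_edge[OF this, of d] have "(z,c) \<in> ?F0\<^sup>* \<or> (z,d) \<in> ?F0\<^sup>*"
        using sym_rtrancl_rev[OF symF0] by blast
      then show ?thesis using rtrancl_mono[OF sub] dc' by (meson rtrancl_trans subsetD)
    qed
    show "connected_on Ob F'" unfolding connected_on_def
      using toc sym_rtrancl_rev[OF symF'] by (meson rtrancl_trans)
    have "card ?F0 = card F - 2"
      using cd dc cnd finF by (simp add: card_Diff_subset)
    moreover have "card F \<ge> 2"
    proof -
      have "{(c,d),(d,c)} \<subseteq> F" using cd dc by auto
      then have "card {(c,d),(d,c)} \<le> card F" using finF by (simp add: card_mono)
      then show ?thesis using cnd by simp
    qed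
    moreover have "card F' = card ?F0 + 2" unfolding F'_def using uv0 vu0 unv finF by (simp add: add.assoc)
    ultimately show "card F' = 2 * (card Ob - 1)" using cardF by linarith
  qed
  have s1: "(\<Sum>(a,b)\<in>F'. w a b) = w u v + w v u + (\<Sum>(a,b)\<in>?F0. w a b)"
    unfolding F'_def using uv0 vu0 unv finF by (simp add: add.assoc)
  have s2a: "(\<Sum>(a,b)\<in>F. w a b) = w c d + (\<Sum>(a,b)\<in>F - {(c,d)}. w a b)"
    using finF cd by (simp add: sum.remove)
  have s2b: "(\<Sum>(a,b)\<in>F - {(c,d)}. w a b) = w d c + (\<Sum>(a,b)\<in>F - {(c,d)} - {(d,c)}. w a b)"
    using sum.remove[of "F - {(c,d)}" "(d,c)" "\<lambda>(a,b). w a b"] finF dc cnd by simp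
  have "F - {(c,d)} - {(d,c)} = ?F0" by auto
  then have s2: "(\<Sum>(a,b)\<in>F. w a b) = w c d + w d c + (\<Sum>(a,b)\<in>?F0. w a b)"
    using s2a s2b by (simp add: add.assoc)
  have "(\<Sum>(a,b)\<in>F'. w a b) < (\<Sum>(a,b)\<in>F. w a b)"
    unfolding s1 s2 using wsym[of u v] wsym[of c d] lt by linarith
  then show ?thesis using treeF' by blast
qed


lemma relpow_avoid:
  assumes "(a,z) \<in> R^^j"
  shows "(a,z) \<in> (R - {(u,v),(v,u)})\<^sup>* \<or> (\<exists>i\<le>j. (a,v) \<in> R^^i)"
  using assms
proof (induction j arbitrary: z)
  case 0 then show ?case by simp
next
  case (Suc j)
  then obtain y where y: "(a,y) \<in> R^^j" "(y,z) \<in> R" by (auto elim: relpow_Suc_E)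
  from Suc.IH[OF y(1)] show ?case
  proof
    assume h: "(a,y) \<in> (R - {(u,v),(v,u)})\<^sup>*"
    show ?case
    proof (cases "(y,z) \<in> {(u,v),(v,u)}")
      case True
      then have "z = v \<or> y = v" by auto
      then show ?thesis
      proof
        assume "z = v" then show ?thesis using Suc.prems by blast
      next
        assume "y = v" then show ?thesis using y(1) le_SucI by blast
      qed
    next
      case False then show ?thesis using h y by (meson Diff_iff rtrancl.rtrancl_into_rtrancl)
    qed
  next
    assume "\<exists>i\<le>j. (a,v) \<in> R^^i" then show ?case by (meson le_SucI)
  qed
qed

lemma crossing_edge:
  assumes "(a,v) \<in> F^^k" "a \<notin> S" "v \<in> S"
  shows "\<exists>x y. (x,y) \<in> F \<and> x \<notin> S \<and> y \<in> S \<and> (a,x) \<in> (F - {(x,y),(y,x)})\<^sup>*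
           \<and> (y,v) \<in> (F - {(x,y),(y,x)})\<^sup>*"
  using assms
proof (induction k arbitrary: v rule: less_induct)
  case (less k)
  show ?case
  proof (cases k)
    case 0 then show ?thesis using less.prems by auto
  next
    case (Suc j)
    then obtain u where u: "(a,u) \<in> F^^j" "(u,v) \<in> F" using less.prems(1) by (auto elim: relpow_Suc_E)
    show ?thesis
    proof (cases "u \<in> S")
      case True
      have "j < k" using Suc by simp
      from less.IH[OF this u(1) less.prems(2) True] obtain x y where xy:
        "(x,y) \<in> F" "x \<notin> S" "y \<in> S" "(a,x) \<in> (F - {(x,y),(y,x)})\<^sup>*"
        "(y,u) \<in> (F - {(x,y),(y,x)})\<^sup>*" by blast
      have "(u,v) \<in> F - {(x,y),(y,x)}" using xy(2) True less.prems(3) u(2) by auto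
      then have "(y,v) \<in> (F - {(x,y),(y,x)})\<^sup>*" using xy(5) by (meson rtrancl.rtrancl_into_rtrancl)
      then show ?thesis using xy by blast
    next
      case False
      from relpow_avoid[OF u(1), of u v] show ?thesis
      proof
        assume "(a,u) \<in> (F - {(u,v),(v,u)})\<^sup>*"
        then show ?thesis using u False less.prems by blast
      next
        assume "\<exists>i\<le>j. (a,v) \<in> F^^i"
        then obtain i where i: "i \<le> j" "(a,v) \<in> F^^i" by blast
        then have "i < k" using Suc by simp
        from less.IH[OF this i(2) less.prems(2,3)] show ?thesis .
      qed
    qed
  qed
qed

lemma is_path_single: "is_path E [x]"
  unfolding is_path_def by simp

lemma is_path_Cons:
  assumes "is_path E ys" "x \<notin> set ys" "(x, hd ys) \<in> E"
  shows "is_path E (x # ys)"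
  unfolding is_path_def
proof (intro conjI allI impI)
  show "x # ys \<noteq> []" by simp
  show "distinct (x # ys)" using assms unfolding is_path_def by simp
  fix i assume i: "Suc i < length (x # ys)"
  show "((x # ys) ! i, (x # ys) ! Suc i) \<in> E"
  proof (cases i)
    case 0 then show ?thesis using assms(1,3) unfolding is_path_def by (simp add: hd_conv_nth)
  next
    case (Suc j) then show ?thesis using assms(1) i unfolding is_path_def by simp
  qed
qed

lemma is_path_snoc:
  assumes "is_path E ys" "x \<notin> set ys" "(last ys, x) \<in> E"
  shows "is_path E (ys @ [x])"
  unfolding is_path_def
proof (intro conjI allI impI)
  show "ys @ [x] \<noteq> []" by simp
  show "distinct (ys @ [x])" using assms unfolding is_path_def by simp
  fix i assume i: "Suc i < length (ys @ [x])"
  have ne: "ys \<noteq> []" using assms(1) unfolding is_path_def by simp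
  show "((ys @ [x]) ! i, (ys @ [x]) ! Suc i) \<in> E"
  proof (cases "Suc i < length ys")
    case True then show ?thesis using assms(1) unfolding is_path_def by (simp add: nth_append)
  next
    case False
    then have "Suc i = length ys" using i by simp
    then have "i = length ys - 1" by simp
    then show ?thesis using assms(3) ne \<open>Suc i = length ys\<close> by (simp add: nth_append last_conv_nth)
  qed
qed

lemma interior_props:
  assumes "distinct xs" "c \<in> set (butlast (tl xs))"
  shows "c \<noteq> hd xs \<and> c \<noteq> last xs \<and> c \<in> set xs"
proof (cases xs)
  case Nil then show ?thesis using assms by simp
next
  case (Cons y ys)
  have ne: "ys \<noteq> []" using assms Cons by auto
  have c: "c \<in> set (butlast ys)" using assms Cons by simp
  then have cys: "c \<in> set ys" by (meson in_set_butlastD)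
  have "ys = butlast ys @ [last ys]" using ne by simp
  then have "last ys \<notin> set (butlast ys)" using assms(1) Cons
    by (metis distinct.simps(2) distinct_append not_distinct_conv_prefix ) 
  then show ?thesis using Cons assms c cys ne by auto
qed

locale rtree =
  fixes V :: "'v set" and E :: "('v \<times> 'v) set" and root :: 'v and par :: "'v \<Rightarrow> 'v" and dep :: "'v \<Rightarrow> nat"
  assumes finV: "finite V" and rootV: "root \<in> V" and par_root: "par root = root"
    and dep_root: "dep root = 0"
    and par_V: "\<And>v. v \<in> V \<Longrightarrow> v \<noteq> root \<Longrightarrow> par v \<in> V"
    and dep_par: "\<And>v. v \<in> V \<Longrightarrow> v \<noteq> root \<Longrightarrow> dep v = Suc (dep (par v))"
    and E_eq: "E = Pset V root par"
begin

definition anc :: "'v \<Rightarrow> 'v \<Rightarrow> bool" where "anc u v \<longleftrightarrow> (\<exists>k. (par ^^ k) v = u)"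

lemma par_V': "v \<in> V \<Longrightarrow> par v \<in> V" using par_V par_root rootV by (cases "v = root") auto

lemma funpow_V: "v \<in> V \<Longrightarrow> (par ^^ k) v \<in> V" by (induction k) (auto simp: par_V')

lemma dep_funpow: "v \<in> V \<Longrightarrow> dep ((par ^^ k) v) = dep v - k"
proof (induction k)
  case 0 then show ?case by simp
next
  case (Suc k)
  let ?u = "(par ^^ k) v"
  have uV: "?u \<in> V" using funpow_V Suc.prems by blast
  show ?case
  proof (cases "?u = root")
    case True
    then show ?thesis using Suc par_root dep_root by simp
  next
    case False
    then show ?thesis using Suc dep_par[OF uV False] by simp
  qed
qed

lemma dep_zero: "v \<in> V \<Longrightarrow> dep v = 0 \<Longrightarrow> v = root" using dep_par by force

lemma anc_refl: "anc v v" unfolding anc_def by (rule exI[of _ 0]) simp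
lemma anc_par: "anc (par v) v" unfolding anc_def by (rule exI[of _ 1]) simp
lemma anc_V: "anc u v \<Longrightarrow> v \<in> V \<Longrightarrow> u \<in> V" unfolding anc_def using funpow_V by blast
lemma anc_root: assumes "v \<in> V" shows "anc root v"
proof -
  have "dep ((par ^^ dep v) v) = 0" using dep_funpow[OF assms] by simp
  then have "(par ^^ dep v) v = root" using dep_zero funpow_V[OF assms] by blast
  then show ?thesis unfolding anc_def by blast
qed
lemma funpow_root: "(par ^^ k) root = root" by (induction k) (auto simp: par_root)
lemma anc_of_root: "anc u root \<Longrightarrow> u = root" unfolding anc_def using funpow_root by auto

lemma anc_step: "v \<in> V \<Longrightarrow> v \<noteq> root \<Longrightarrow> anc w v \<longleftrightarrow> (w = v \<or> anc w (par v))"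
  unfolding anc_def
proof
  assume "\<exists>k. (par ^^ k) v = w" then obtain k where k: "(par ^^ k) v = w" by blast
  show "w = v \<or> (\<exists>k. (par ^^ k) (par v) = w)"
  proof (cases k)
    case 0 then show ?thesis using k by simp
  next
    case (Suc k') then have "(par ^^ k') (par v) = w" using k by (simp add: funpow_Suc_right del: funpow.simps)
    then show ?thesis by blast
  qed
next
  assume "w = v \<or> (\<exists>k. (par ^^ k) (par v) = w)"
  then show "\<exists>k. (par ^^ k) v = w"
  proof
    assume "w = v" then show ?thesis by (intro exI[of _ 0]) simp
  next
    assume "\<exists>k. (par ^^ k) (par v) = w"
    then obtain k where "(par ^^ k) (par v) = w" by blast
    then show ?thesis by (intro exI[of _ "Suc k"]) (simp add: funpow_Suc_right del: funpow.simps)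
  qed
qed

lemma anc_trans: assumes "anc u v" "anc v w" shows "anc u w"
proof -
  obtain i where i: "(par ^^ i) v = u" using assms(1) unfolding anc_def by blast
  obtain j where j: "(par ^^ j) w = v" using assms(2) unfolding anc_def by blast
  have "(par ^^ (i + j)) w = u" using i j by (simp add: funpow_add)
  then show ?thesis unfolding anc_def by blast
qed

lemma anc_dep: "anc u v \<Longrightarrow> v \<in> V \<Longrightarrow> dep u \<le> dep v"
  unfolding anc_def using dep_funpow by auto

lemma anc_dep_eq: assumes "anc u v" "v \<in> V" "dep u = dep v" shows "u = v"
proof -
  obtain k where k: "(par ^^ k) v = u" using assms(1) unfolding anc_def by blast
  have "dep u = dep v - k" using k dep_funpow assms(2) by blast
  show ?thesis
  proof (cases k)
    case 0 then show ?thesis using k by simp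
  next
    case (Suc k')
    then have "dep v = 0" using \<open>dep u = dep v - k\<close> assms(3) by simp
    then have "v = root" using dep_zero assms(2) by blast
    then show ?thesis using k funpow_root by simp
  qed
qed

lemma anc_antisym: assumes "anc u v" "anc v u" "v \<in> V" shows "u = v"
proof -
  have uV: "u \<in> V" using anc_V assms by blast
  have "dep u = dep v" using anc_dep[OF assms(1,3)] anc_dep[OF assms(2) uV] by simp
  then show ?thesis using anc_dep_eq assms by blast
qed

lemma anc_chain_aux: assumes "(par ^^ i) w = u" "(par ^^ j) w = v" "i \<le> j" shows "anc v u"
proof -
  have "(par ^^ (j - i + i)) w = v" using assms by simp
  then have "(par ^^ (j - i)) u = v" using assms(1) by (simp add: funpow_add)
  then show ?thesis unfolding anc_def by blast
qed

lemma anc_chain: assumes "anc u w" "anc v w" shows "anc u v \<or> anc v u"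
proof -
  obtain i where i: "(par ^^ i) w = u" using assms(1) unfolding anc_def by blast
  obtain j where j: "(par ^^ j) w = v" using assms(2) unfolding anc_def by blast
  show ?thesis
  proof (cases "i \<le> j")
    case True then show ?thesis using anc_chain_aux[OF i j] by blast
  next
    case False then show ?thesis using anc_chain_aux[OF j i] by simp
  qed
qed

lemma not_anc_par: "v \<in> V \<Longrightarrow> v \<noteq> root \<Longrightarrow> \<not> anc v (par v)"
  using anc_dep[of v "par v"] dep_par par_V by fastforce

lemma child_exists:
  assumes "anc a b" "a \<noteq> b" "b \<in> V"
  shows "\<exists>c. c \<in> V \<and> c \<noteq> root \<and> par c = a \<and> anc c b"
  using assms
proof (induction "dep b" arbitrary: b rule: less_induct)
  case less
  have bnr: "b \<noteq> root" using less.prems anc_of_root by blast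
  have ap: "anc a (par b)" using anc_step less.prems bnr by blast
  show ?case
  proof (cases "a = par b")
    case True then show ?thesis using bnr less.prems anc_refl by blast
  next
    case False
    have "dep (par b) < dep b" using dep_par[OF less.prems(3) bnr] by simp
    from less.hyps[OF this ap False par_V[OF less.prems(3) bnr]] obtain c where
      c: "c \<in> V" "c \<noteq> root" "par c = a" "anc c (par b)" by blast
    then show ?thesis using anc_trans anc_par by blast
  qed
qed

lemma child_unique:
  assumes "c1 \<in> V" "c1 \<noteq> root" "c2 \<in> V" "c2 \<noteq> root" "par c1 = par c2" "anc c1 b" "anc c2 b"
  shows "c1 = c2"
proof -
  have "dep c1 = dep c2" using dep_par[OF assms(1,2)] dep_par[OF assms(3,4)] assms(5) by simp
  from anc_chain[OF assms(6,7)] show ?thesis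
  proof
    assume "anc c1 c2" then show ?thesis using anc_dep_eq assms(3) \<open>dep c1 = dep c2\<close> by blast
  next
    assume "anc c2 c1"
    have "c2 = c1" by (rule anc_dep_eq[OF \<open>anc c2 c1\<close> assms(1)]) (use \<open>dep c1 = dep c2\<close> in simp)
    then show ?thesis by simp
  qed
qed

lemma children_sum:
  assumes "a \<in> V" "b \<in> V"
  shows "(\<Sum>c\<in>{c\<in>V-{root}. par c = a}. (if anc c b then 1 else 0::real)) = (if anc a b \<and> a \<noteq> b then 1 else 0)"
proof -
  have "(\<Sum>c\<in>{c\<in>V-{root}. par c = a}. (if anc c b then 1 else 0::real)) = real (card {c\<in>V-{root}. par c = a \<and> anc c b})"
    using finV by (simp add: sum.If_cases Int_def conj_assoc)
  also have "\<dots> = (if anc a b \<and> a \<noteq> b then 1 else 0)"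
  proof (cases "anc a b \<and> a \<noteq> b")
    case True
    then obtain c where c: "c \<in> V" "c \<noteq> root" "par c = a" "anc c b" using child_exists assms by blast
    have "{c\<in>V-{root}. par c = a \<and> anc c b} = {c}"
      using c child_unique by auto
    then show ?thesis using True by simp
  next
    case False
    have e: "{c\<in>V-{root}. par c = a \<and> anc c b} = {}"
    proof -
      { fix c assume c: "c \<in> V" "c \<noteq> root" "par c = a" "anc c b"
        then have "anc a b" using anc_par anc_trans by blast
        with False have "a = b" by blast
        then have "anc c a" "anc a c" using c anc_par by auto
        then have "c = a" using anc_antisym c(1) by blast
        then have False using not_anc_par[OF c(1) c(2)] c(3) anc_refl by simp
      }
      then show ?thesis by blast
    qed
    show ?thesis unfolding e using False by simp
  qed
  finally show ?thesis .
qed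

end

context rtree begin

lemma if01_mult: "(if P then 1 else 0) * (x::real) = (if P then x else 0)" by simp
lemma mult_if01: "(x::real) * (if P then 1 else 0) = (if P then x else 0)" by simp

definition Gs :: "('v \<Rightarrow> real) \<Rightarrow> 'v \<Rightarrow> 'v \<Rightarrow> real" where
  "Gs l u d = (\<Sum>w\<in>V-{root}. if anc w u \<and> anc w d then l w else 0)"

lemma Gs_root: "Gs l root d = 0"
  unfolding Gs_def by (rule sum.neutral) (use anc_of_root in auto)

lemma Gs_sym: "Gs l u d = Gs l d u"
  unfolding Gs_def by (simp add: conj_commute)

lemma Gs_step:
  assumes "a \<in> V" "a \<noteq> root"
  shows "Gs l a d - Gs l (par a) d = (if anc a d then l a else 0)"
proof -
  have "Gs l a d - Gs l (par a) d
      = (\<Sum>w\<in>V-{root}. (if anc w a \<and> anc w d then l w else 0) - (if anc w (par a) \<and> anc w d then l w else 0))"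
    unfolding Gs_def by (simp add: sum_subtractf)
  also have "\<dots> = (\<Sum>w\<in>V-{root}. if w = a then (if anc a d then l a else 0) else 0)"
  proof (rule sum.cong)
    fix w assume w: "w \<in> V - {root}"
    have "anc w a \<longleftrightarrow> w = a \<or> anc w (par a)" using anc_step assms by blast
    moreover have "\<not> anc a (par a)" using not_anc_par assms by blast
    ultimately show "(if anc w a \<and> anc w d then l w else 0) - (if anc w (par a) \<and> anc w d then l w else 0)
        = (if w = a then (if anc a d then l a else 0) else 0)" by auto
  qed simp
  also have "\<dots> = (if anc a d then l a else 0)" using finV assms by (simp add: sum.delta)
  finally show ?thesis .
qed

lemma E_iff: "(a,c) \<in> E \<longleftrightarrow> (a \<in> V - {root} \<and> c = par a) \<or> (c \<in> V - {root} \<and> a = par c)"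
  unfolding E_eq Pset_def by auto

lemma E_sub: "(a,c) \<in> E \<Longrightarrow> a \<in> V \<and> c \<in> V"
  using E_iff par_V' by auto

lemma E_sym: "(a,c) \<in> E \<Longrightarrow> (c,a) \<in> E"
  using E_iff by auto

lemma E_irrefl: "(a,a) \<notin> E"
proof
  assume "(a,a) \<in> E"
  then have "a \<in> V" "a \<noteq> root" "par a = a" using E_iff by auto
  then show False using not_anc_par anc_refl by metis
qed

lemma nbr_eq: assumes "a \<in> V - {root}"
  shows "{c. (a,c) \<in> E} = insert (par a) {c\<in>V-{root}. par c = a}"
  using assms E_iff by auto

lemma lap_Gs:
  assumes wt: "\<And>a b. (a,b) \<in> E \<Longrightarrow> wt a b > 0 \<and> wt a b = wt b a"
    and a: "a \<in> V - {root}" and b: "b \<in> V - {root}"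
  shows "(\<Sum>c\<in>V-{root}. lap E wt a c * Gs (\<lambda>w. 1 / wt w (par w)) c b) = (if a = b then 1 else 0)"
proof -
  define l where "l = (\<lambda>w. 1 / wt w (par w))"
  define G where "G c = Gs l c b" for c
  define Ch where "Ch = {c\<in>V-{root}. par c = a}"
  define S where "S = (\<Sum>c\<in>{c. (a,c) \<in> E}. wt a c)"
  have nbr: "{c. (a,c) \<in> E} = insert (par a) Ch" unfolding Ch_def using nbr_eq a by blast
  have finCh: "finite Ch" unfolding Ch_def using finV by simp
  have paCh: "par a \<notin> Ch"
  proof
    assume "par a \<in> Ch"
    then have "par (par a) = a" unfolding Ch_def by auto
    then have "anc a (par a)" using anc_par[of "par a"] by simp
    then show False using not_anc_par a by blast
  qed
  have nbrV: "{c\<in>V. (a,c) \<in> E} = {c. (a,c) \<in> E}" using E_sub by auto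
  have "(\<Sum>c\<in>V-{root}. lap E wt a c * G c) = (\<Sum>c\<in>V. lap E wt a c * G c)"
    using sum.remove[OF finV rootV, of "\<lambda>c. lap E wt a c * G c"] by (simp add: G_def Gs_root)
  also have "\<dots> = (\<Sum>c\<in>V. (if c = a then S * G c else 0) - (if (a,c) \<in> E then wt a c * G c else 0))"
    by (rule sum.cong) (auto simp: lap_def S_def E_irrefl)
  also have "\<dots> = S * G a - (\<Sum>c\<in>{c. (a,c) \<in> E}. wt a c * G c)"
    using a finV by (simp add: sum_subtractf sum.delta sum.inter_filter[symmetric] nbrV)
  also have "\<dots> = (\<Sum>c\<in>{c. (a,c) \<in> E}. wt a c * (G a - G c))"
    unfolding S_def by (simp add: sum_distrib_right sum_subtractf right_diff_distrib)
  also have "\<dots> = wt a (par a) * (G a - G (par a)) + (\<Sum>c\<in>Ch. wt a c * (G a - G c))"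
    unfolding nbr using finCh paCh by simp
  also have "\<dots> = (if anc a b then 1 else 0) - (\<Sum>c\<in>Ch. (if anc c b then 1 else 0))"
  proof -
    have e1: "(a, par a) \<in> E" using E_iff a by auto
    have "wt a (par a) * (G a - G (par a)) = (if anc a b then 1 else 0)"
      unfolding G_def using Gs_step[of a l b] a wt[OF e1] by (simp add: l_def)
    moreover have "(\<Sum>c\<in>Ch. wt a c * (G a - G c)) = (\<Sum>c\<in>Ch. - (if anc c b then 1 else 0))"
    proof (rule sum.cong)
      fix c assume c: "c \<in> Ch"
      then have cV: "c \<in> V" "c \<noteq> root" "par c = a" unfolding Ch_def by auto
      have e2: "(a, c) \<in> E" using E_iff cV by auto
      have "G a - G c = - (if anc c b then l c else 0)"
        unfolding G_def using Gs_step[of c l b] cV by simp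
      then show "wt a c * (G a - G c) = - (if anc c b then 1 else 0)"
        using wt[OF e2] cV by (simp add: l_def)
    qed simp
    ultimately show ?thesis by (simp add: sum_negf)
  qed
  also have "\<dots> = (if a = b then 1 else 0)"
    using children_sum[of a b] a b anc_refl unfolding Ch_def by auto
  finally show ?thesis unfolding G_def l_def .
qed

lemma lap_sym:
  assumes wt: "\<And>a b. (a,b) \<in> E \<Longrightarrow> wt a b > 0 \<and> wt a b = wt b a"
  shows "lap E wt a c = lap E wt c a"
  unfolding lap_def using wt E_sym by auto

lemma mat_inv_lap:
  assumes wt: "\<And>a b. (a,b) \<in> E \<Longrightarrow> wt a b > 0 \<and> wt a b = wt b a"
  shows "mat_inv_on (V-{root}) (lap E wt)
       = (\<lambda>u d. if u \<in> V-{root} \<and> d \<in> V-{root} then Gs (\<lambda>w. 1 / wt w (par w)) u d else 0)"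
    (is "_ = ?G0")
  unfolding mat_inv_on_def
proof (rule the_equality)
  let ?N = "V - {root}"
  let ?l = "\<lambda>w. 1 / wt w (par w)"
  have right: "(\<Sum>c\<in>?N. lap E wt a c * ?G0 c b) = (if a = b then 1 else 0)" if "a \<in> ?N" "b \<in> ?N" for a b
  proof -
    have "(\<Sum>c\<in>?N. lap E wt a c * ?G0 c b) = (\<Sum>c\<in>?N. lap E wt a c * Gs ?l c b)"
      using that by (intro sum.cong) auto
    then show ?thesis using lap_Gs[of wt a b, OF wt that] by simp
  qed
  show "(\<forall>a\<in>?N. \<forall>b\<in>?N. (\<Sum>c\<in>?N. lap E wt a c * ?G0 c b) = (if a = b then 1 else 0))
       \<and> (\<forall>a b. a \<notin> ?N \<or> b \<notin> ?N \<longrightarrow> ?G0 a b = 0)"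
    using right by auto
  fix G
  assume hG: "(\<forall>a\<in>?N. \<forall>b\<in>?N. (\<Sum>c\<in>?N. lap E wt a c * G c b) = (if a = b then 1 else 0))
       \<and> (\<forall>a b. a \<notin> ?N \<or> b \<notin> ?N \<longrightarrow> G a b = 0)"
  have left: "(\<Sum>e\<in>?N. ?G0 u e * lap E wt e c) = (if u = c then 1 else 0)" if "u \<in> ?N" "c \<in> ?N" for u c
  proof -
    have "(\<Sum>e\<in>?N. ?G0 u e * lap E wt e c) = (\<Sum>e\<in>?N. lap E wt c e * ?G0 e u)"
      using that by (intro sum.cong) (auto simp: lap_sym[of wt, OF wt] Gs_sym)
    then show ?thesis using right[OF that(2,1)] by auto
  qed
  show "G = ?G0"
  proof (intro ext)
    fix u d
    show "G u d = ?G0 u d"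
    proof (cases "u \<in> ?N \<and> d \<in> ?N")
      case False then show ?thesis using hG by auto
    next
      case True
      have "G u d = (\<Sum>c\<in>?N. (if u = c then 1 else 0) * G c d)"
      proof -
        have "(\<Sum>c\<in>?N. (if u = c then 1 else 0) * G c d) = (\<Sum>c\<in>?N. if u = c then G c d else 0)"
          by (rule sum.cong) auto
        also have "\<dots> = G u d" using True finV sum.delta'[of ?N u "\<lambda>c. G c d"] by simp
        finally show ?thesis by simp
      qed
      also have "\<dots> = (\<Sum>c\<in>?N. (\<Sum>e\<in>?N. ?G0 u e * lap E wt e c) * G c d)"
        using left True by (intro sum.cong) auto
      also have "\<dots> = (\<Sum>e\<in>?N. ?G0 u e * (\<Sum>c\<in>?N. lap E wt e c * G c d))"
      proof -
        have "(\<Sum>c\<in>?N. (\<Sum>e\<in>?N. ?G0 u e * lap E wt e c) * G c d)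
            = (\<Sum>c\<in>?N. \<Sum>e\<in>?N. ?G0 u e * (lap E wt e c * G c d))"
          by (simp add: sum_distrib_right mult.assoc)
        also have "\<dots> = (\<Sum>e\<in>?N. \<Sum>c\<in>?N. ?G0 u e * (lap E wt e c * G c d))"
          by (rule sum.swap)
        also have "\<dots> = (\<Sum>e\<in>?N. ?G0 u e * (\<Sum>c\<in>?N. lap E wt e c * G c d))"
          by (simp add: sum_distrib_left)
        finally show ?thesis .
      qed
      also have "\<dots> = (\<Sum>e\<in>?N. ?G0 u e * (if e = d then 1 else 0))"
        using hG True by (intro sum.cong) auto
      also have "\<dots> = (\<Sum>e\<in>?N. if e = d then ?G0 u e else 0)"
        by (rule sum.cong) auto
      also have "\<dots> = ?G0 u d" using True finV sum.delta[of ?N d "\<lambda>e. ?G0 u e"] by simp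
      finally show ?thesis .
    qed
  qed
qed

definition between :: "'v \<Rightarrow> 'v \<Rightarrow> 'v \<Rightarrow> bool" where
  "between a b c \<longleftrightarrow> (anc c a \<or> anc c b) \<and> (\<forall>w. anc w a \<and> anc w b \<longrightarrow> anc w c)"

lemma path_exists:
  assumes "a \<in> V" "b \<in> V"
  shows "\<exists>xs. is_path E xs \<and> hd xs = a \<and> last xs = b \<and> (\<forall>c\<in>set xs. between a b c)"
  using assms
proof (induction "dep a + dep b" arbitrary: a b rule: less_induct)
  case less
  show ?case
  proof (cases "a = b")
    case True
    then show ?thesis using is_path_single[of E a] anc_refl unfolding between_def by auto
  next
    case ab: False
    show ?thesis
    proof (cases "anc b a")
      case True
      have anr: "a \<noteq> root" using True ab anc_of_root by blast
      have paV: "par a \<in> V" using par_V less.prems anr by blast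
      have "dep (par a) + dep b < dep a + dep b" using dep_par[OF less.prems(1) anr] by simp
      from less.hyps[OF this paV less.prems(2)] obtain ys where
        ys: "is_path E ys" "hd ys = par a" "last ys = b" "\<forall>c\<in>set ys. between (par a) b c" by blast
      have ane: "ys \<noteq> []" using ys(1) unfolding is_path_def by simp
      have anot: "a \<notin> set ys"
      proof
        assume "a \<in> set ys"
        then have "anc a (par a) \<or> anc a b" using ys(4) unfolding between_def by blast
        then show False using not_anc_par[OF less.prems(1) anr] True ab anc_antisym less.prems(1) by blast
      qed
      have ea: "(a, hd ys) \<in> E" using ys(2) E_iff less.prems(1) anr by auto
      have bpa: "anc b (par a)" using True ab anc_step[OF less.prems(1) anr, of b] by auto
      have "\<forall>c\<in>set (a # ys). between a b c"
      proof
        fix c assume "c \<in> set (a # ys)"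
        then consider "c = a" | "c \<in> set ys" by auto
        then show "between a b c"
        proof cases
          case 1 then show ?thesis unfolding between_def using anc_refl by blast
        next
          case 2
          then have bc: "between (par a) b c" using ys(4) by blast
          have "anc c a \<or> anc c b" using bc anc_par anc_trans unfolding between_def by blast
          moreover have "\<forall>w. anc w a \<and> anc w b \<longrightarrow> anc w c"
            using bc bpa anc_trans unfolding between_def by blast
          ultimately show ?thesis unfolding between_def by blast
        qed
      qed
      then show ?thesis using is_path_Cons[OF ys(1) anot ea] ys ane by (intro exI[of _ "a # ys"]) auto
    next
      case False
      have bnr: "b \<noteq> root" using False anc_root less.prems by blast
      have pbV: "par b \<in> V" using par_V less.prems bnr by blast
      have "dep a + dep (par b) < dep a + dep b" using dep_par[OF less.prems(2) bnr] by simp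
      from less.hyps[OF this less.prems(1) pbV] obtain ys where
        ys: "is_path E ys" "hd ys = a" "last ys = par b" "\<forall>c\<in>set ys. between a (par b) c" by blast
      have ane: "ys \<noteq> []" using ys(1) unfolding is_path_def by simp
      have bnot: "b \<notin> set ys"
      proof
        assume "b \<in> set ys"
        then have "anc b a \<or> anc b (par b)" using ys(4) unfolding between_def by blast
        then show False using not_anc_par[OF less.prems(2) bnr] False by blast
      qed
      have eb: "(last ys, b) \<in> E" using ys(3) E_iff less.prems(2) bnr by auto
      have "\<forall>c\<in>set (ys @ [b]). between a b c"
      proof
        fix c assume "c \<in> set (ys @ [b])"
        then consider "c = b" | "c \<in> set ys" by auto
        then show "between a b c"
        proof cases
          case 1 then show ?thesis unfolding between_def using anc_refl by blast
        next
          case 2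
          then have bc: "between a (par b) c" using ys(4) by blast
          have "anc c a \<or> anc c b" using bc anc_par anc_trans unfolding between_def by blast
          moreover have "\<forall>w. anc w a \<and> anc w b \<longrightarrow> anc w c"
          proof (intro allI impI)
            fix w assume w: "anc w a \<and> anc w b"
            then have "w = b \<or> anc w (par b)" using anc_step less.prems(2) bnr by blast
            then have "anc w (par b)" using w False by blast
            then show "anc w c" using bc w unfolding between_def by blast
          qed
          ultimately show ?thesis unfolding between_def by blast
        qed
      qed
      then show ?thesis using is_path_snoc[OF ys(1) bnot eb] ys ane by (intro exI[of _ "ys @ [b]"]) auto
    qed
  qed
qed

end

definition Qf :: "real \<Rightarrow> real \<Rightarrow> real \<Rightarrow> real \<Rightarrow> real \<Rightarrow> real" where
  "Qf P Q R u v = u\<^sup>2 * P + v\<^sup>2 * Q + 2 * u * v * R"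

lemma Qf_neg: "Qf P Q R (-u) (-v) = Qf P Q R u v"
  unfolding Qf_def by simp

lemma Qf_sigma: "\<sigma> = 1 \<or> \<sigma> = -1 \<Longrightarrow> Qf P Q R (\<sigma> * u) (\<sigma> * v) = Qf P Q R u v"
  using Qf_neg by auto

lemma Qf_mono:
  assumes "0 \<le> u'" "u' \<le> u" "0 \<le> v'" "v' \<le> v" "0 \<le> P" "0 \<le> Q" "0 \<le> R"
  shows "Qf P Q R u' v' \<le> Qf P Q R u v"
proof -
  have "u'\<^sup>2 \<le> u\<^sup>2" using assms by (simp add: power_mono)
  then have 1: "u'\<^sup>2 * P \<le> u\<^sup>2 * P" using assms by (simp add: mult_right_mono)
  have "v'\<^sup>2 \<le> v\<^sup>2" using assms by (simp add: power_mono)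
  then have 2: "v'\<^sup>2 * Q \<le> v\<^sup>2 * Q" using assms by (simp add: mult_right_mono)
  have "u' * v' \<le> u * v" using assms by (simp add: mult_mono)
  then have 3: "2 * u' * v' * R \<le> 2 * u * v * R" using assms
    by (metis mult.assoc mult_left_mono mult_right_mono zero_le_numeral)
  show ?thesis unfolding Qf_def using 1 2 3 by linarith
qed

lemma Qf_strict:
  assumes "0 \<le> u'" "u' < u" "0 \<le> v'" "v' < v" "0 \<le> P" "0 \<le> Q" "0 \<le> R" "0 < P + Q"
  shows "Qf P Q R u' v' < Qf P Q R u v"
proof -
  have a: "u'\<^sup>2 < u\<^sup>2" using assms by (simp add: power_strict_mono)
  have b: "v'\<^sup>2 < v\<^sup>2" using assms by (simp add: power_strict_mono)
  have 1: "u'\<^sup>2 * P \<le> u\<^sup>2 * P" using assms a by (simp add: mult_right_mono)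
  have 2: "v'\<^sup>2 * Q \<le> v\<^sup>2 * Q" using assms b by (simp add: mult_right_mono)
  have "u' * v' \<le> u * v" using assms by (simp add: mult_mono)
  then have 3: "2 * u' * v' * R \<le> 2 * u * v * R" using assms
    by (metis mult.assoc mult_left_mono mult_right_mono zero_le_numeral)
  have "u'\<^sup>2 * P < u\<^sup>2 * P \<or> v'\<^sup>2 * Q < v\<^sup>2 * Q"
  proof (cases "P > 0")
    case True then show ?thesis using a by simp
  next
    case False then have "Q > 0" using assms by simp
    then show ?thesis using b by simp
  qed
  then show ?thesis unfolding Qf_def using 1 2 3 by linarith
qed

context rtree begin

definition sab :: "'v \<Rightarrow> 'v \<Rightarrow> 'v \<Rightarrow> real" where
  "sab a b w = (if anc w a then 1 else 0) - (if anc w b then 1 else 0)"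

lemma Gs_diff: "Gs l a d - Gs l b d = (\<Sum>w\<in>V-{root}. if anc w d then l w * sab a b w else 0)"
  unfolding Gs_def by (simp add: sum_subtractf[symmetric]) (rule sum.cong, auto simp: sab_def)

definition Phi :: "('v \<Rightarrow> real) \<Rightarrow> ('v \<Rightarrow> real) \<Rightarrow> ('v \<Rightarrow> real) \<Rightarrow> ('v \<Rightarrow> real) \<Rightarrow> ('v \<Rightarrow> real)
   \<Rightarrow> 'v \<Rightarrow> 'v \<Rightarrow> real" where
  "Phi l1 l2 P Q R a b = (\<Sum>d\<in>V-{root}. Qf (P d) (Q d) (R d) (Gs l1 a d - Gs l1 b d) (Gs l2 a d - Gs l2 b d))"

lemma Phi_sym: "Phi l1 l2 P Q R a b = Phi l1 l2 P Q R b a"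
  unfolding Phi_def
proof (rule sum.cong)
  fix d
  show "Qf (P d) (Q d) (R d) (Gs l1 a d - Gs l1 b d) (Gs l2 a d - Gs l2 b d) =
        Qf (P d) (Q d) (R d) (Gs l1 b d - Gs l1 a d) (Gs l2 b d - Gs l2 a d)"
    using Qf_neg[of "P d" "Q d" "R d" "Gs l1 b d - Gs l1 a d" "Gs l2 b d - Gs l2 a d"] by simp
qed simp

lemma sab_vals: "sab a b w = 0 \<or> sab a b w = 1 \<or> sab a b w = -1"
  unfolding sab_def by auto

lemma sign_chain:
  assumes "anc w1 d" "anc w2 d" "sab a b w1 < 0" "sab a b w2 > 0"
  shows False
proof -
  have 1: "anc w1 b" "\<not> anc w1 a" using assms(3) unfolding sab_def by (auto split: if_splits)
  have 2: "anc w2 a" "\<not> anc w2 b" using assms(4) unfolding sab_def by (auto split: if_splits)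
  from anc_chain[OF assms(1,2)] show False using 1 2 anc_trans by blast
qed

lemma sum_sig:
  fixes l :: "'v \<Rightarrow> real"
  shows "\<sigma> * (\<Sum>w\<in>V-{root}. if anc w d then l w * s w else 0) = (\<Sum>w\<in>V-{root}. if anc w d then l w * (\<sigma> * s w) else 0)"
  by (simp add: sum_distrib_left) (rule sum.cong, auto)

lemma key:
  fixes l1 l2 P Q R :: "'v \<Rightarrow> real"
  assumes l1: "\<forall>w\<in>V-{root}. l1 w > 0" and l2: "\<forall>w\<in>V-{root}. l2 w > 0"
    and PQR: "\<forall>d\<in>V-{root}. P d \<ge> 0 \<and> Q d \<ge> 0 \<and> R d \<ge> 0 \<and> P d + Q d > 0"
    and h1: "\<forall>w\<in>V-{root}. sab a' b' w \<noteq> 0 \<longrightarrow> sab a b w = sab a' b' w"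
    and w0: "w0 \<in> V-{root}" "sab a b w0 \<noteq> 0" "sab a' b' w0 = 0"
  shows "Phi l1 l2 P Q R a' b' < Phi l1 l2 P Q R a b"
proof -
  let ?N = "V - {root}"
  have perd: "Qf (P d) (Q d) (R d) (Gs l1 a' d - Gs l1 b' d) (Gs l2 a' d - Gs l2 b' d)
     \<le> Qf (P d) (Q d) (R d) (Gs l1 a d - Gs l1 b d) (Gs l2 a d - Gs l2 b d)
     \<and> (d = w0 \<longrightarrow> Qf (P d) (Q d) (R d) (Gs l1 a' d - Gs l1 b' d) (Gs l2 a' d - Gs l2 b' d)
     < Qf (P d) (Q d) (R d) (Gs l1 a d - Gs l1 b d) (Gs l2 a d - Gs l2 b d))"
    if d: "d \<in> ?N" for d
  proof -
    define \<sigma> :: real where "\<sigma> = (if \<exists>w\<in>?N. anc w d \<and> sab a b w < 0 then -1 else 1)"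
    have sig: "\<sigma> = 1 \<or> \<sigma> = -1" unfolding \<sigma>_def by auto
    have t0: "0 \<le> \<sigma> * sab a b w" if "w \<in> ?N" "anc w d" for w
    proof (cases "\<exists>w\<in>?N. anc w d \<and> sab a b w < 0")
      case True
      then obtain w1 where "anc w1 d" "sab a b w1 < 0" by blast
      then have "\<not> sab a b w > 0" using sign_chain that by blast
      then show ?thesis unfolding \<sigma>_def using True by simp
    next
      case False
      then have "\<not> sab a b w < 0" using that by blast
      then show ?thesis unfolding \<sigma>_def using False by simp
    qed
    have t1: "0 \<le> \<sigma> * sab a' b' w \<and> \<sigma> * sab a' b' w \<le> \<sigma> * sab a b w" if "w \<in> ?N" "anc w d" for w
      using t0[OF that] h1 that by (cases "sab a' b' w = 0") auto
    have mono: "0 \<le> \<sigma> * (Gs l a' d - Gs l b' d) \<and> \<sigma> * (Gs l a' d - Gs l b' d) \<le> \<sigma> * (Gs l a d - Gs l b d)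
       \<and> (d = w0 \<longrightarrow> \<sigma> * (Gs l a' d - Gs l b' d) < \<sigma> * (Gs l a d - Gs l b d))"
      if l: "\<forall>w\<in>?N. l w > 0" for l
    proof (intro conjI impI)
      show "0 \<le> \<sigma> * (Gs l a' d - Gs l b' d)"
        unfolding Gs_diff sum_sig using t1 l by (intro sum_nonneg) (auto intro: mult_nonneg_nonneg less_imp_le)
      show "\<sigma> * (Gs l a' d - Gs l b' d) \<le> \<sigma> * (Gs l a d - Gs l b d)"
        unfolding Gs_diff sum_sig using t1 l by (intro sum_mono) (auto intro: mult_left_mono less_imp_le)
      assume "d = w0"
      have "0 < (\<Sum>w\<in>?N. (if anc w d then l w * (\<sigma> * sab a b w) else 0) - (if anc w d then l w * (\<sigma> * sab a' b' w) else 0))"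
      proof (rule sum_pos2[of _ w0])
        show "finite ?N" using finV by simp
        show "w0 \<in> ?N" using w0 by simp
        have "\<sigma> * sab a b w0 \<noteq> 0" using sig w0 by auto
        moreover have "0 \<le> \<sigma> * sab a b w0" using t0[OF w0(1)] \<open>d = w0\<close> anc_refl[of w0] by simp
        ultimately have "\<sigma> * sab a b w0 > 0" by linarith
        then show "0 < (if anc w0 d then l w0 * (\<sigma> * sab a b w0) else 0) - (if anc w0 d then l w0 * (\<sigma> * sab a' b' w0) else 0)"
          using \<open>d = w0\<close> anc_refl w0 l by simp
        fix w assume "w \<in> ?N"
        then show "0 \<le> (if anc w d then l w * (\<sigma> * sab a b w) else 0) - (if anc w d then l w * (\<sigma> * sab a' b' w) else 0)"
          using t1 l by (auto intro!: mult_left_mono less_imp_le)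
      qed
      then show "\<sigma> * (Gs l a' d - Gs l b' d) < \<sigma> * (Gs l a d - Gs l b d)"
        unfolding Gs_diff sum_sig by (simp add: sum_subtractf)
    qed
    note m1 = mono[OF l1] and m2 = mono[OF l2]
    have Pd: "P d \<ge> 0" "Q d \<ge> 0" "R d \<ge> 0" "P d + Q d > 0" using PQR d by auto
    have e1: "Qf (P d) (Q d) (R d) (Gs l1 a' d - Gs l1 b' d) (Gs l2 a' d - Gs l2 b' d)
      = Qf (P d) (Q d) (R d) (\<sigma> * (Gs l1 a' d - Gs l1 b' d)) (\<sigma> * (Gs l2 a' d - Gs l2 b' d))"
      using Qf_sigma[OF sig] by simp
    have e2: "Qf (P d) (Q d) (R d) (Gs l1 a d - Gs l1 b d) (Gs l2 a d - Gs l2 b d)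
      = Qf (P d) (Q d) (R d) (\<sigma> * (Gs l1 a d - Gs l1 b d)) (\<sigma> * (Gs l2 a d - Gs l2 b d))"
      using Qf_sigma[OF sig] by simp
    show ?thesis unfolding e1 e2
      using Qf_mono[OF _ _ _ _ Pd(1-3)] Qf_strict[OF _ _ _ _ Pd] m1 m2 by blast
  qed
  show ?thesis unfolding Phi_def
  proof (rule sum_strict_mono_ex1)
    show "finite ?N" using finV by simp
    show "\<forall>d\<in>?N. Qf (P d) (Q d) (R d) (Gs l1 a' d - Gs l1 b' d) (Gs l2 a' d - Gs l2 b' d)
     \<le> Qf (P d) (Q d) (R d) (Gs l1 a d - Gs l1 b d) (Gs l2 a d - Gs l2 b d)" using perd by blast
    show "\<exists>d\<in>?N. Qf (P d) (Q d) (R d) (Gs l1 a' d - Gs l1 b' d) (Gs l2 a' d - Gs l2 b' d)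
     < Qf (P d) (Q d) (R d) (Gs l1 a d - Gs l1 b d) (Gs l2 a d - Gs l2 b d)" using perd w0(1) by blast
  qed
qed

definition goodw :: "('v \<Rightarrow> real) \<Rightarrow> ('v \<Rightarrow> real) \<Rightarrow> ('v \<Rightarrow> real) \<Rightarrow> ('v \<Rightarrow> real) \<Rightarrow> ('v \<Rightarrow> real) \<Rightarrow> bool" where
  "goodw l1 l2 P Q R \<longleftrightarrow> (\<forall>w\<in>V-{root}. l1 w > 0) \<and> (\<forall>w\<in>V-{root}. l2 w > 0)
     \<and> (\<forall>d\<in>V-{root}. P d \<ge> 0 \<and> Q d \<ge> 0 \<and> R d \<ge> 0 \<and> P d + Q d > 0)"

lemma key_good:
  assumes "goodw l1 l2 P Q R"
    and h1: "\<forall>w\<in>V-{root}. sab a' b' w \<noteq> 0 \<longrightarrow> sab a b w = sab a' b' w"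
    and w0: "w0 \<in> V-{root}" "sab a b w0 \<noteq> 0" "sab a' b' w0 = 0"
  shows "Phi l1 l2 P Q R a' b' < Phi l1 l2 P Q R a b"
  using key[OF _ _ _ h1 w0] assms(1) unfolding goodw_def by blast

end

context rtree begin

lemma key_edge:
  assumes g: "goodw l1 l2 P Q R"
    and b: "b \<in> V" "b \<noteq> root" and xy: "x \<in> V" "y \<in> V" "\<not> anc b x" "anc b y"
    and ne: "\<not> (x = par b \<and> y = b)"
  shows "Phi l1 l2 P Q R (par b) b < Phi l1 l2 P Q R x y"
proof -
  let ?N = "V - {root}"
  have step: "anc w b \<longleftrightarrow> w = b \<or> anc w (par b)" for w using anc_step b by blast
  have nb: "\<not> anc b (par b)" using not_anc_par b by blast
  have s1: "sab (par b) b w \<noteq> 0 \<longleftrightarrow> w = b" for w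
    unfolding sab_def using step[of w] nb by auto
  have h1: "\<forall>w\<in>?N. sab (par b) b w \<noteq> 0 \<longrightarrow> sab x y w = sab (par b) b w"
  proof (intro ballI impI)
    fix w assume "w \<in> ?N" "sab (par b) b w \<noteq> 0"
    then have "w = b" using s1 by blast
    then show "sab x y w = sab (par b) b w" unfolding sab_def using xy nb anc_refl by simp
  qed
  have "\<exists>w0\<in>?N. sab x y w0 \<noteq> 0 \<and> sab (par b) b w0 = 0"
  proof (rule ccontr)
    assume nt: "\<not> ?thesis"
    have H: "anc w x \<longleftrightarrow> anc w y" if "w \<in> ?N" "w \<noteq> b" for w
    proof -
      have "sab (par b) b w = 0" using s1[of w] that by blast
      then have "sab x y w = 0" using nt that by blast
      then show ?thesis unfolding sab_def by (simp split: if_splits)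
    qed
    have ynr: "y \<noteq> root" using xy(4) b anc_of_root by blast
    have yb: "y = b"
    proof (rule ccontr)
      assume "y \<noteq> b"
      then have "anc y x" using H[of y] ynr xy anc_refl by blast
      then show False using xy anc_trans by blast
    qed
    have xnb: "x \<noteq> b" using xy(3) anc_refl by blast
    have "x = par b"
    proof (cases "par b = root")
      case True
      show ?thesis
      proof (rule ccontr)
        assume "x \<noteq> par b"
        then have "x \<noteq> root" using True by simp
        then have "anc x y" using H[of x] xy xnb anc_refl by blast
        then have "anc x (par b)" using yb step xnb by blast
        then show False using True anc_of_root \<open>x \<noteq> root\<close> by simp
      qed
    next
      case False
      have pbV: "par b \<in> V" using par_V b by blast
      have pnb: "par b \<noteq> b" using nb anc_refl[of b] by auto
      have "anc (par b) x" using H[of "par b"] pbV False pnb anc_par yb by blast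
      then have xnr: "x \<noteq> root" using False anc_of_root by blast
      then have "anc x y" using H[of x] xy xnb anc_refl by blast
      then have "anc x (par b)" using yb step xnb by blast
      then show ?thesis using \<open>anc (par b) x\<close> anc_antisym pbV by blast
    qed
    then show False using ne yb by blast
  qed
  then obtain w0 where "w0 \<in> ?N" "sab x y w0 \<noteq> 0" "sab (par b) b w0 = 0" by blast
  then show ?thesis using key_good[OF g h1] by blast
qed

lemma key_between:
  assumes g: "goodw l1 l2 P Q R"
    and V: "a \<in> V" "b \<in> V" and bt: "between a b c" and ne: "c \<noteq> a" "c \<noteq> b" and ca: "anc c a"
  shows "Phi l1 l2 P Q R a c < Phi l1 l2 P Q R a b \<and> Phi l1 l2 P Q R c b < Phi l1 l2 P Q R a b"
proof
  let ?N = "V - {root}"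
  have com: "anc w c" if "anc w a" "anc w b" for w using bt that unfolding between_def by blast
  have cV: "c \<in> V" using anc_V ca V by blast
  show "Phi l1 l2 P Q R a c < Phi l1 l2 P Q R a b"
  proof -
    have h1: "\<forall>w\<in>?N. sab a c w \<noteq> 0 \<longrightarrow> sab a b w = sab a c w"
    proof (intro ballI impI)
      fix w assume "w \<in> ?N" "sab a c w \<noteq> 0"
      moreover have "anc w c \<longrightarrow> anc w a" using ca anc_trans by blast
      ultimately have "anc w a" "\<not> anc w c" unfolding sab_def by (auto split: if_splits)
      then have "\<not> anc w b" using com by blast
      then show "sab a b w = sab a c w" unfolding sab_def using \<open>anc w a\<close> \<open>\<not> anc w c\<close> by simp
    qed
    show ?thesis
    proof (cases "anc c b")
      case False
      have "c \<noteq> root" using False anc_root V by blast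
      moreover have "sab a b c \<noteq> 0" "sab a c c = 0" unfolding sab_def using ca False anc_refl by auto
      ultimately show ?thesis using key_good[OF g h1, of c] cV by blast
    next
      case True
      have bnr: "b \<noteq> root" using True anc_of_root ne by blast
      have nba: "\<not> anc b a"
      proof
        assume "anc b a" then have "anc b c" using com anc_refl by blast
        then show False using anc_antisym[OF _ True cV] ne by blast
      qed
      have nbc: "\<not> anc b c" using anc_antisym[OF _ True cV] ne by blast
      have "sab a b b \<noteq> 0" "sab a c b = 0" unfolding sab_def using nba nbc anc_refl by auto
      then show ?thesis using key_good[OF g h1, of b] V bnr by blast
    qed
  qed
  show "Phi l1 l2 P Q R c b < Phi l1 l2 P Q R a b"
  proof -
    have h1: "\<forall>w\<in>?N. sab c b w \<noteq> 0 \<longrightarrow> sab a b w = sab c b w"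
    proof (intro ballI impI)
      fix w assume "w \<in> ?N" "sab c b w \<noteq> 0"
      then have "(anc w c \<and> \<not> anc w b) \<or> (\<not> anc w c \<and> anc w b)" unfolding sab_def by (auto split: if_splits)
      then show "sab a b w = sab c b w"
      proof
        assume h: "anc w c \<and> \<not> anc w b"
        then have "anc w a" using ca anc_trans by blast
        then show ?thesis using h unfolding sab_def by simp
      next
        assume h: "\<not> anc w c \<and> anc w b"
        then have "\<not> anc w a" using com by blast
        then show ?thesis using h unfolding sab_def by simp
      qed
    qed
    have anr: "a \<noteq> root" using ca anc_of_root ne by blast
    have nab: "\<not> anc a b"
    proof
      assume "anc a b" then have "anc a c" using com anc_refl by blast
      then show False using anc_antisym[OF _ ca cV] ne by blast
    qed
    have nac: "\<not> anc a c" using anc_antisym[OF _ ca cV] ne by blast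
    have "sab a b a \<noteq> 0" "sab c b a = 0" unfolding sab_def using nab nac anc_refl by auto
    then show ?thesis using key_good[OF g h1, of a] V anr by blast
  qed
qed

end

lemma abs_mult_le_sq: "\<bar>(a::real) * b\<bar> \<le> a\<^sup>2 + b\<^sup>2"
proof -
  have 1: "2 * (a * b) \<le> a\<^sup>2 + b\<^sup>2" using sum_squares_bound[of a b] by (simp add: mult.assoc)
  have 2: "- (2 * (a * b)) \<le> a\<^sup>2 + b\<^sup>2" using sum_squares_bound[of a "-b"] by (simp add: mult.assoc)
  have 3: "0 \<le> a\<^sup>2" "0 \<le> b\<^sup>2" by simp_all
  show ?thesis unfolding abs_le_iff using 1 2 3 by linarith
qed

context prob_space begin

definition sqi :: "('a \<Rightarrow> real) \<Rightarrow> bool" where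
  "sqi f \<longleftrightarrow> f \<in> borel_measurable M \<and> integrable M (\<lambda>\<omega>. (f \<omega>)\<^sup>2)"

lemma sqi_integrable: "sqi f \<Longrightarrow> integrable M f"
  unfolding sqi_def using square_integrable_imp_integrable by blast

lemma sqi_mult: assumes "sqi f" "sqi g" shows "integrable M (\<lambda>\<omega>. f \<omega> * g \<omega>)"
proof (rule Bochner_Integration.integrable_bound[where f="\<lambda>\<omega>. (f \<omega>)\<^sup>2 + (g \<omega>)\<^sup>2"])
  show "integrable M (\<lambda>\<omega>. (f \<omega>)\<^sup>2 + (g \<omega>)\<^sup>2)" using assms unfolding sqi_def by auto
  show "(\<lambda>\<omega>. f \<omega> * g \<omega>) \<in> borel_measurable M" using assms unfolding sqi_def
    by (intro borel_measurable_times) auto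
  show "AE x in M. norm (f x * g x) \<le> norm ((f x)\<^sup>2 + (g x)\<^sup>2)"
    using abs_mult_le_sq by (intro AE_I2) (simp add: abs_le_iff)
qed

lemma sqi_add: assumes "sqi f" "sqi g" shows "sqi (\<lambda>\<omega>. f \<omega> + g \<omega>)"
  unfolding sqi_def
proof
  show "(\<lambda>\<omega>. f \<omega> + g \<omega>) \<in> borel_measurable M" using assms unfolding sqi_def
    by (intro borel_measurable_add) auto
  have "integrable M (\<lambda>\<omega>. (f \<omega>)\<^sup>2 + (g \<omega>)\<^sup>2 + 2 * (f \<omega> * g \<omega>))"
    using assms sqi_mult unfolding sqi_def by auto
  then show "integrable M (\<lambda>\<omega>. (f \<omega> + g \<omega>)\<^sup>2)"
    by (simp add: power2_sum algebra_simps)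
qed

lemma sqi_cmult: assumes "sqi f" shows "sqi (\<lambda>\<omega>. c * f \<omega>)"
  using assms unfolding sqi_def by (auto simp: power_mult_distrib intro: borel_measurable_times)

lemma sqi_const: "sqi (\<lambda>\<omega>. c)"
  unfolding sqi_def by simp

lemma sqi_diff: assumes "sqi f" "sqi g" shows "sqi (\<lambda>\<omega>. f \<omega> - g \<omega>)"
  using sqi_add[OF assms(1) sqi_cmult[OF assms(2), of "-1"]] by simp

lemma sqi_sum: assumes "finite I" "\<forall>i\<in>I. sqi (f i)" shows "sqi (\<lambda>\<omega>. \<Sum>i\<in>I. f i \<omega>)"
  using assms
proof (induction rule: finite_induct)
  case empty then show ?case using sqi_const[of 0] by simp
next
  case (insert i I) then show ?case using sqi_add[of "f i" "\<lambda>\<omega>. \<Sum>i\<in>I. f i \<omega>"] by simp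
qed

lemma covar_sym: "covar M f g = covar M g f"
  unfolding covar_def by (simp add: mult.commute)

lemma covar_add_left:
  assumes "sqi f" "sqi g" "sqi h"
  shows "covar M (\<lambda>\<omega>. f \<omega> + g \<omega>) h = covar M f h + covar M g h"
proof -
  have If: "integrable M f" and Ig: "integrable M g" using assms sqi_integrable by auto
  let ?cf = "\<integral>\<omega>. f \<omega> \<partial>M" and ?cg = "\<integral>\<omega>. g \<omega> \<partial>M" and ?ch = "\<integral>\<omega>. h \<omega> \<partial>M"
  have i1: "integrable M (\<lambda>\<omega>. (f \<omega> - ?cf) * (h \<omega> - ?ch))"
    using sqi_mult sqi_diff sqi_const assms by blast
  have i2: "integrable M (\<lambda>\<omega>. (g \<omega> - ?cg) * (h \<omega> - ?ch))"
    using sqi_mult sqi_diff sqi_const assms by blast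
  have "covar M (\<lambda>\<omega>. f \<omega> + g \<omega>) h
      = (\<integral>\<omega>. (f \<omega> - ?cf) * (h \<omega> - ?ch) + (g \<omega> - ?cg) * (h \<omega> - ?ch) \<partial>M)"
    unfolding covar_def using If Ig by (simp add: algebra_simps)
  also have "\<dots> = covar M f h + covar M g h"
    unfolding covar_def using i1 i2 by simp
  finally show ?thesis .
qed

lemma covar_cmult_left: "covar M (\<lambda>\<omega>. c * f \<omega>) h = c * covar M f h"
proof -
  have "covar M (\<lambda>\<omega>. c * f \<omega>) h
     = (\<integral>\<omega>. c * ((f \<omega> - (\<integral>\<omega>. f \<omega> \<partial>M)) * (h \<omega> - (\<integral>\<omega>. h \<omega> \<partial>M))) \<partial>M)"
    unfolding covar_def by (simp add: algebra_simps)
  also have "\<dots> = c * covar M f h" unfolding covar_def by simp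
  finally show ?thesis .
qed

lemma covar_zero_left: "covar M (\<lambda>\<omega>. 0) h = 0"
  unfolding covar_def by simp

lemma covar_sum_left:
  assumes "finite I" "\<forall>i\<in>I. sqi (f i)" "sqi h"
  shows "covar M (\<lambda>\<omega>. \<Sum>i\<in>I. f i \<omega>) h = (\<Sum>i\<in>I. covar M (f i) h)"
  using assms
proof (induction rule: finite_induct)
  case empty then show ?case using covar_zero_left by simp
next
  case (insert i I)
  have "covar M (\<lambda>\<omega>. \<Sum>i\<in>insert i I. f i \<omega>) h = covar M (\<lambda>\<omega>. f i \<omega> + (\<Sum>i\<in>I. f i \<omega>)) h"
    using insert by simp
  also have "\<dots> = covar M (f i) h + covar M (\<lambda>\<omega>. \<Sum>i\<in>I. f i \<omega>) h"
    using covar_add_left[of "f i" "\<lambda>\<omega>. \<Sum>i\<in>I. f i \<omega>" h] insert sqi_sum by auto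
  finally show ?case using insert by simp
qed

lemma covar_bilin:
  assumes "sqi f" "sqi g" "sqi h" "sqi k"
  shows "covar M (\<lambda>\<omega>. a * f \<omega> + b * g \<omega>) (\<lambda>\<omega>. c * h \<omega> + e * k \<omega>)
    = a * c * covar M f h + a * e * covar M f k + b * c * covar M g h + b * e * covar M g k"
proof -
  have H: "sqi (\<lambda>\<omega>. c * h \<omega> + e * k \<omega>)" using assms sqi_add sqi_cmult by blast
  have r: "covar M u (\<lambda>\<omega>. c * h \<omega> + e * k \<omega>) = c * covar M u h + e * covar M u k" if "sqi u" for u
    using covar_add_left[OF sqi_cmult[OF assms(3)] sqi_cmult[OF assms(4)] that, of c e]
      covar_cmult_left covar_sym by metis
  have "covar M (\<lambda>\<omega>. a * f \<omega> + b * g \<omega>) (\<lambda>\<omega>. c * h \<omega> + e * k \<omega>)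
     = a * covar M f (\<lambda>\<omega>. c * h \<omega> + e * k \<omega>) + b * covar M g (\<lambda>\<omega>. c * h \<omega> + e * k \<omega>)"
    using covar_add_left[OF sqi_cmult[OF assms(1)] sqi_cmult[OF assms(2)] H, of a b] covar_cmult_left by simp
  also have "\<dots> = a * c * covar M f h + a * e * covar M f k + b * c * covar M g h + b * e * covar M g k"
    using r[OF assms(1)] r[OF assms(2)] by (simp add: algebra_simps)
  finally show ?thesis .
qed

lemma covar_self_nonneg: "covar M f f \<ge> 0"
  unfolding covar_def by simp

lemma var_lin:
  fixes p q :: "'v \<Rightarrow> 'a \<Rightarrow> real" and N :: "'v set"
  assumes fin: "finite N" and sq: "\<forall>d\<in>N. sqi (p d) \<and> sqi (q d)"
    and off: "\<forall>d\<in>N. \<forall>e\<in>N. d \<noteq> e \<longrightarrow> covar M (p d) (p e) = 0 \<and> covar M (q d) (q e) = 0 \<and> covar M (q d) (p e) = 0"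
  shows "(\<integral>\<omega>. (((\<Sum>d\<in>N. \<alpha>1 d * p d \<omega> + \<beta>1 d * q d \<omega>) - (\<integral>\<omega>'. (\<Sum>d\<in>N. \<alpha>1 d * p d \<omega>' + \<beta>1 d * q d \<omega>') \<partial>M))
               - ((\<Sum>d\<in>N. \<alpha>2 d * p d \<omega> + \<beta>2 d * q d \<omega>) - (\<integral>\<omega>'. (\<Sum>d\<in>N. \<alpha>2 d * p d \<omega>' + \<beta>2 d * q d \<omega>') \<partial>M)))\<^sup>2 \<partial>M)
    = (\<Sum>d\<in>N. Qf (covar M (p d) (p d)) (covar M (q d) (q d)) (covar M (q d) (p d)) (\<alpha>1 d - \<alpha>2 d) (\<beta>1 d - \<beta>2 d))"
proof -
  define Z where "Z d \<omega> = (\<alpha>1 d - \<alpha>2 d) * p d \<omega> + (\<beta>1 d - \<beta>2 d) * q d \<omega>" for d \<omega>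
  define X where "X \<omega> = (\<Sum>d\<in>N. Z d \<omega>)" for \<omega>
  define Y1 where "Y1 \<omega> = (\<Sum>d\<in>N. \<alpha>1 d * p d \<omega> + \<beta>1 d * q d \<omega>)" for \<omega>
  define Y2 where "Y2 \<omega> = (\<Sum>d\<in>N. \<alpha>2 d * p d \<omega> + \<beta>2 d * q d \<omega>)" for \<omega>
  have sqZ1: "sqi (Z d)" if "d \<in> N" for d
    unfolding Z_def using sq that by (intro sqi_add sqi_cmult) auto
  have sqZ: "\<forall>d\<in>N. sqi (Z d)" using sqZ1 by blast
  have sqX: "sqi X" unfolding X_def using sqi_sum[OF fin sqZ] .
  have sqY1: "sqi Y1" unfolding Y1_def using sq by (intro sqi_sum[OF fin] ballI sqi_add sqi_cmult) auto
  have sqY2: "sqi Y2" unfolding Y2_def using sq by (intro sqi_sum[OF fin] ballI sqi_add sqi_cmult) auto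
  have XY: "X \<omega> = Y1 \<omega> - Y2 \<omega>" for \<omega>
  proof -
    have "Z d \<omega> = (\<alpha>1 d * p d \<omega> + \<beta>1 d * q d \<omega>) - (\<alpha>2 d * p d \<omega> + \<beta>2 d * q d \<omega>)" for d
      unfolding Z_def by (simp add: left_diff_distrib)
    then show ?thesis unfolding X_def Y1_def Y2_def by (simp add: sum_subtractf)
  qed
  have IX: "(\<integral>\<omega>. X \<omega> \<partial>M) = (\<integral>\<omega>. Y1 \<omega> \<partial>M) - (\<integral>\<omega>. Y2 \<omega> \<partial>M)"
    unfolding XY using sqi_integrable[OF sqY1] sqi_integrable[OF sqY2] by simp
  have pw: "((Y1 \<omega> - (\<integral>\<omega>'. Y1 \<omega>' \<partial>M)) - (Y2 \<omega> - (\<integral>\<omega>'. Y2 \<omega>' \<partial>M)))\<^sup>2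
      = (X \<omega> - (\<integral>\<omega>'. X \<omega>' \<partial>M)) * (X \<omega> - (\<integral>\<omega>'. X \<omega>' \<partial>M))" for \<omega>
  proof -
    have "(Y1 \<omega> - (\<integral>\<omega>'. Y1 \<omega>' \<partial>M)) - (Y2 \<omega> - (\<integral>\<omega>'. Y2 \<omega>' \<partial>M)) = X \<omega> - (\<integral>\<omega>'. X \<omega>' \<partial>M)"
      unfolding IX by (simp add: XY)
    then show ?thesis by (simp add: power2_eq_square)
  qed
  have "(\<integral>\<omega>. ((Y1 \<omega> - (\<integral>\<omega>'. Y1 \<omega>' \<partial>M)) - (Y2 \<omega> - (\<integral>\<omega>'. Y2 \<omega>' \<partial>M)))\<^sup>2 \<partial>M) = covar M X X"
    unfolding covar_def pw ..
  also have "\<dots> = (\<Sum>d\<in>N. covar M (Z d) X)"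
    unfolding X_def using covar_sum_left[OF fin sqZ] sqX unfolding X_def by blast
  also have "\<dots> = (\<Sum>d\<in>N. \<Sum>e\<in>N. covar M (Z e) (Z d))"
  proof (rule sum.cong)
    fix d assume d: "d \<in> N"
    have "covar M (Z d) X = covar M X (Z d)" by (rule covar_sym)
    also have "\<dots> = (\<Sum>e\<in>N. covar M (Z e) (Z d))"
      unfolding X_def using covar_sum_left[OF fin sqZ] sqZ d by blast
    finally show "covar M (Z d) X = (\<Sum>e\<in>N. covar M (Z e) (Z d))" .
  qed simp
  also have "\<dots> = (\<Sum>d\<in>N. covar M (Z d) (Z d))"
  proof (rule sum.cong)
    fix d assume d: "d \<in> N"
    have z: "covar M (Z e) (Z d) = 0" if "e \<in> N" "e \<noteq> d" for e
    proof -
      have "covar M (Z e) (Z d) = (\<alpha>1 e - \<alpha>2 e) * (\<alpha>1 d - \<alpha>2 d) * covar M (p e) (p d)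
          + (\<alpha>1 e - \<alpha>2 e) * (\<beta>1 d - \<beta>2 d) * covar M (p e) (q d)
          + (\<beta>1 e - \<beta>2 e) * (\<alpha>1 d - \<alpha>2 d) * covar M (q e) (p d)
          + (\<beta>1 e - \<beta>2 e) * (\<beta>1 d - \<beta>2 d) * covar M (q e) (q d)"
        unfolding Z_def using covar_bilin[where f="p e" and g="q e" and h="p d" and k="q d"
          and a="\<alpha>1 e - \<alpha>2 e" and b="\<beta>1 e - \<beta>2 e" and c="\<alpha>1 d - \<alpha>2 d" and e="\<beta>1 d - \<beta>2 d"] sq that d
        by simp
      moreover have "covar M (p e) (q d) = covar M (q d) (p e)" by (rule covar_sym)
      ultimately show ?thesis using off that d by simp
    qed
    have "(\<Sum>e\<in>N. covar M (Z e) (Z d)) = covar M (Z d) (Z d) + (\<Sum>e\<in>N-{d}. covar M (Z e) (Z d))"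
      using sum.remove[OF fin d] by blast
    also have "(\<Sum>e\<in>N-{d}. covar M (Z e) (Z d)) = 0" using z by (intro sum.neutral) blast
    finally show "(\<Sum>e\<in>N. covar M (Z e) (Z d)) = covar M (Z d) (Z d)" by simp
  qed simp
  also have "\<dots> = (\<Sum>d\<in>N. Qf (covar M (p d) (p d)) (covar M (q d) (q d)) (covar M (q d) (p d)) (\<alpha>1 d - \<alpha>2 d) (\<beta>1 d - \<beta>2 d))"
  proof (rule sum.cong)
    fix d assume d: "d \<in> N"
    have "covar M (Z d) (Z d) = (\<alpha>1 d - \<alpha>2 d) * (\<alpha>1 d - \<alpha>2 d) * covar M (p d) (p d)
          + (\<alpha>1 d - \<alpha>2 d) * (\<beta>1 d - \<beta>2 d) * covar M (p d) (q d)
          + (\<beta>1 d - \<beta>2 d) * (\<alpha>1 d - \<alpha>2 d) * covar M (q d) (p d)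
          + (\<beta>1 d - \<beta>2 d) * (\<beta>1 d - \<beta>2 d) * covar M (q d) (q d)"
      unfolding Z_def using covar_bilin[where f="p d" and g="q d" and h="p d" and k="q d"
          and a="\<alpha>1 d - \<alpha>2 d" and b="\<beta>1 d - \<beta>2 d" and c="\<alpha>1 d - \<alpha>2 d" and e="\<beta>1 d - \<beta>2 d"] sq d
        by simp
    moreover have "covar M (p d) (q d) = covar M (q d) (p d)" by (rule covar_sym)
    ultimately show "covar M (Z d) (Z d) = Qf (covar M (p d) (p d)) (covar M (q d) (q d)) (covar M (q d) (p d)) (\<alpha>1 d - \<alpha>2 d) (\<beta>1 d - \<beta>2 d)"
      unfolding Qf_def by (simp add: power2_eq_square algebra_simps)
  qed simp
  finally show ?thesis unfolding Y1_def Y2_def .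
qed

end

lemma phi_sym: "phi V rt E r x M p q a b = phi V rt E r x M p q b a"
  unfolding phi_def Let_def by (simp add: power2_commute)

theorem theorem4:
  fixes V :: "'v set" and E :: "('v \<times> 'v) set" and root :: 'v
    and r x :: "'v \<Rightarrow> 'v \<Rightarrow> real"
    and M :: "'w measure" and p q :: "'v \<Rightarrow> 'w \<Rightarrow> real"
    and Mis :: "'v set" and F :: "('v \<times> 'v) set"
  assumes tree: "is_tree V E"
    and root: "root \<in> V" "degree E root = 1"
    and r_pos: "\<forall>a b. (a, b) \<in> E \<longrightarrow> r a b > 0 \<and> r a b = r b a"
    and x_pos: "\<forall>a b. (a, b) \<in> E \<longrightarrow> x a b > 0 \<and> x a b = x b a"
    and prob: "prob_space M"
    and rv: "\<forall>a\<in>V - {root}. p a \<in> borel_measurable M \<and> q a \<in> borel_measurable M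
               \<and> integrable M (\<lambda>\<omega>. (p a \<omega>)\<^sup>2) \<and> integrable M (\<lambda>\<omega>. (q a \<omega>)\<^sup>2)"
    and cov_offdiag: "\<forall>a\<in>V - {root}. \<forall>b\<in>V - {root}. a \<noteq> b \<longrightarrow>
               covar M (p a) (p b) = 0 \<and> covar M (q a) (q b) = 0 \<and> covar M (q a) (p b) = 0"
    and cov_qp_diag: "\<forall>a\<in>V - {root}. covar M (q a) (p a) \<ge> 0"
    and var_pos: "\<forall>c\<in>V - {root}. covar M (p c) (p c) + covar M (q c) (q c) > 0"
    and missing: "Mis \<subseteq> V - {root}" "\<forall>c\<in>Mis. degree E c \<le> 2"
    and mst: "is_mst (V - Mis) (phi V root E r x M p q) F"
  shows "(\<forall>a\<in>V - Mis. \<forall>b\<in>V - Mis. (a, b) \<in> E \<longrightarrow> (a, b) \<in> F)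
       \<and> (\<forall>(a, b)\<in>F. (a, b) \<notin> E \<longrightarrow> separated_by E Mis a b)"
proof -
  let ?N = "V - {root}"
  let ?Ob = "V - Mis"
  from tree have finV: "finite V" and Vne: "V \<noteq> {}" and ugE: "ugraph V E" and conE: "connected_on V E"
    and cardE: "card E = 2 * (card V - 1)" unfolding is_tree_def by blast+
  obtain par0 and dep :: "'v \<Rightarrow> nat" where pd: "par0 root = root" "dep root = 0"
    "\<forall>v\<in>V-{root}. par0 v \<in> V \<and> (v, par0 v) \<in> E \<and> dep v = Suc (dep (par0 v))"
    using parent_exists[OF finV ugE conE root(1)] by blast
  have Psub: "Pset V root par0 \<subseteq> E" using pd(3) ugE unfolding Pset_def ugraph_def by (auto dest: symD)
  have "card (Pset V root par0) = card E"
    using card_Pset[of V root dep par0] finV root(1) pd(3) cardE by simp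
  then have Eeq: "E = Pset V root par0"
    using card_subset_eq[OF ugraph_finite[OF finV ugE] Psub] by simp
  interpret T: rtree V E root par0 dep
    by unfold_locales (use pd Eeq finV root(1) in auto)
  interpret P: prob_space M by (rule prob)

  define lr where "lr w = r w (par0 w)" for w
  define lx where "lx w = x w (par0 w)" for w
  have edge_par: "(w, par0 w) \<in> E" if "w \<in> ?N" for w using pd(3) that by blast
  have minv_r: "mat_inv_on ?N (lap E (\<lambda>c d. 1 / r c d)) = (\<lambda>u d. if u \<in> ?N \<and> d \<in> ?N then T.Gs lr u d else 0)"
  proof -
    have m: "mat_inv_on ?N (lap E (\<lambda>c d. 1 / r c d))
        = (\<lambda>u d. if u \<in> ?N \<and> d \<in> ?N then T.Gs (\<lambda>w. 1 / (1 / r w (par0 w))) u d else 0)"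
      by (rule T.mat_inv_lap) (use r_pos in auto)
    have e: "(\<lambda>w. 1 / (1 / r w (par0 w))) = lr" unfolding lr_def by simp
    show ?thesis using m unfolding e .
  qed
  have minv_x: "mat_inv_on ?N (lap E (\<lambda>c d. 1 / x c d)) = (\<lambda>u d. if u \<in> ?N \<and> d \<in> ?N then T.Gs lx u d else 0)"
  proof -
    have m: "mat_inv_on ?N (lap E (\<lambda>c d. 1 / x c d))
        = (\<lambda>u d. if u \<in> ?N \<and> d \<in> ?N then T.Gs (\<lambda>w. 1 / (1 / x w (par0 w))) u d else 0)"
      by (rule T.mat_inv_lap) (use x_pos in auto)
    have e: "(\<lambda>w. 1 / (1 / x w (par0 w))) = lx" unfolding lx_def by simp
    show ?thesis using m unfolding e .
  qed
  have volt_eq: "volt V root E r x p q a = (\<lambda>\<omega>. \<Sum>d\<in>?N. T.Gs lr a d * p d \<omega> + T.Gs lx a d * q d \<omega>)"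
    if a: "a \<in> V" for a
  proof (cases "a = root")
    case True
    then show ?thesis unfolding volt_def by (simp add: T.Gs_root)
  next
    case False
    have aN: "a \<in> ?N" using a False by blast
    show ?thesis unfolding volt_def minv_r minv_x
    proof (intro ext)
      fix \<omega>
      show "(if a \<in> ?N then \<Sum>b\<in>?N. (if a \<in> ?N \<and> b \<in> ?N then T.Gs lr a b else 0) * p b \<omega>
               + (if a \<in> ?N \<and> b \<in> ?N then T.Gs lx a b else 0) * q b \<omega> else 0)
          = (\<Sum>d\<in>?N. T.Gs lr a d * p d \<omega> + T.Gs lx a d * q d \<omega>)"
        using aN by (simp only: if_True) (rule sum.cong, simp_all)
    qed
  qed
  define Op where "Op d = covar M (p d) (p d)" for d
  define Oq where "Oq d = covar M (q d) (q d)" for d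
  define Oqp where "Oqp d = covar M (q d) (p d)" for d
  have sq: "\<forall>d\<in>?N. P.sqi (p d) \<and> P.sqi (q d)" using rv unfolding P.sqi_def by blast
  have phi_eq: "phi V root E r x M p q a b = T.Phi lr lx Op Oq Oqp a b" if "a \<in> V" "b \<in> V" for a b
    unfolding phi_def Let_def volt_eq[OF that(1)] volt_eq[OF that(2)] T.Phi_def Op_def Oq_def Oqp_def
    using P.var_lin[OF _ sq cov_offdiag] finV by simp
  have good: "T.goodw lr lx Op Oq Oqp"
    unfolding T.goodw_def
  proof (intro conjI ballI)
    fix w assume w: "w \<in> ?N"
    show "lr w > 0" unfolding lr_def using r_pos edge_par[OF w] by blast
    show "lx w > 0" unfolding lx_def using x_pos edge_par[OF w] by blast
    show "Op w \<ge> 0" unfolding Op_def by (rule P.covar_self_nonneg)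
    show "Oq w \<ge> 0" unfolding Oq_def by (rule P.covar_self_nonneg)
    show "Oqp w \<ge> 0" unfolding Oqp_def using cov_qp_diag w by blast
    show "Op w + Oq w > 0" unfolding Op_def Oq_def using var_pos w by blast
  qed

  define w where "w = phi V root E r x M p q"
  have wsym: "\<And>a b. w a b = w b a" unfolding w_def by (rule phi_sym)
  have wPhi: "w a b = T.Phi lr lx Op Oq Oqp a b" if "a \<in> V" "b \<in> V" for a b
    unfolding w_def using phi_eq that by blast
  from mst have treeF: "is_tree ?Ob F" and minF: "\<forall>F'. is_tree ?Ob F' \<longrightarrow> (\<Sum>(a, b)\<in>F. w a b) \<le> (\<Sum>(a, b)\<in>F'. w a b)"
    unfolding is_mst_def w_def by blast+
  have noimp: "\<not> (\<exists>F'. is_tree ?Ob F' \<and> (\<Sum>(a, b)\<in>F'. w a b) < (\<Sum>(a, b)\<in>F. w a b))"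
    using minF by force
  from treeF have ugF: "ugraph ?Ob F" and conF: "connected_on ?Ob F" unfolding is_tree_def by blast+
  have symF: "sym F" using ugF unfolding ugraph_def by blast
  have FO: "(a,b) \<in> F \<Longrightarrow> a \<in> ?Ob \<and> b \<in> ?Ob" for a b using ugF unfolding ugraph_def by blast
  have symF0: "sym (F - {(c,d),(d,c)})" for c d using symF unfolding sym_def by blast

  have P1: "(par0 b, b) \<in> F" if b: "b \<in> V" "b \<noteq> root" "par0 b \<in> ?Ob" "b \<in> ?Ob" for b
  proof (rule ccontr)
    let ?a = "par0 b"
    assume nF: "(?a, b) \<notin> F"
    define S where "S = {v. T.anc b v}"
    have aS: "?a \<notin> S" unfolding S_def using T.not_anc_par b by blast
    have bS: "b \<in> S" unfolding S_def using T.anc_refl by blast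
    have "(?a, b) \<in> F\<^sup>*" using conF b unfolding connected_on_def by blast
    then obtain k where "(?a, b) \<in> F^^k" using rtrancl_imp_relpow by blast
    from crossing_edge[OF this aS bS] obtain u1 v1 where uv: "(u1,v1) \<in> F" "u1 \<notin> S" "v1 \<in> S"
      "(?a,u1) \<in> (F - {(u1,v1),(v1,u1)})\<^sup>*" "(v1,b) \<in> (F - {(u1,v1),(v1,u1)})\<^sup>*" by blast
    have uvV: "u1 \<in> V" "v1 \<in> V" using FO[OF uv(1)] by auto
    have ne: "\<not> (u1 = ?a \<and> v1 = b)" using uv(1) nF by blast
    have "T.Phi lr lx Op Oq Oqp ?a b < T.Phi lr lx Op Oq Oqp u1 v1"
      using T.key_edge[OF good b(1,2) uvV] uv(2,3) ne unfolding S_def by blast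
    then have lt: "w ?a b < w u1 v1" using wPhi uvV b T.par_V by simp
    have "(b, v1) \<in> (F - {(u1,v1),(v1,u1)})\<^sup>*" using sym_rtrancl_rev[OF symF0 uv(5)] .
    from exchange[OF treeF uv(1) uv(4) this wsym lt] show False using noimp by blast
  qed
  have part1: "\<forall>a\<in>?Ob. \<forall>b\<in>?Ob. (a, b) \<in> E \<longrightarrow> (a, b) \<in> F"
  proof (intro ballI impI)
    fix a b assume ab: "a \<in> ?Ob" "b \<in> ?Ob" "(a,b) \<in> E"
    then consider "a \<in> ?N" "b = par0 a" | "b \<in> ?N" "a = par0 b" using T.E_iff by blast
    then show "(a,b) \<in> F"
    proof cases
      case 1
      then have "(par0 a, a) \<in> F" using P1[of a] ab by auto
      then show ?thesis using 1 symF by (auto dest: symD)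
    next
      case 2
      then show ?thesis using P1[of b] ab by auto
    qed
  qed

  have part2: "\<forall>(a, b)\<in>F. (a, b) \<notin> E \<longrightarrow> separated_by E Mis a b"
  proof (intro ballI impI, clarify)
    fix a b assume abF: "(a,b) \<in> F" and abE: "(a,b) \<notin> E"
    show "separated_by E Mis a b"
    proof (rule ccontr)
      assume nsep: "\<not> separated_by E Mis a b"
      have abO: "a \<in> ?Ob" "b \<in> ?Ob" using FO[OF abF] by auto
      then have abV: "a \<in> V" "b \<in> V" by auto
      obtain xs where xs: "is_path E xs" "hd xs = a" "last xs = b" "\<forall>c\<in>set xs. T.between a b c"
        using T.path_exists[OF abV] by blast
      have "\<not> set (butlast (tl xs)) \<subseteq> Mis" using nsep xs unfolding separated_by_def by blast
      then obtain c where c: "c \<in> set (butlast (tl xs))" "c \<notin> Mis" by blast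
      have dxs: "distinct xs" using xs(1) unfolding is_path_def by blast
      from interior_props[OF dxs c(1)] xs have cab: "c \<noteq> a" "c \<noteq> b" and bt: "T.between a b c" by auto
      have cV: "c \<in> V" using bt T.anc_V abV unfolding T.between_def by blast
      have lt: "T.Phi lr lx Op Oq Oqp a c < T.Phi lr lx Op Oq Oqp a b
              \<and> T.Phi lr lx Op Oq Oqp c b < T.Phi lr lx Op Oq Oqp a b"
      proof (cases "T.anc c a")
        case True
        then show ?thesis using T.key_between[OF good abV bt cab] by blast
      next
        case False
        then have cb: "T.anc c b" using bt unfolding T.between_def by blast
        have bt': "T.between b a c" using bt unfolding T.between_def by blast
        from T.key_between[OF good abV(2,1) bt' cab(2,1) cb] show ?thesis
          using T.Phi_sym by metis
      qed
      then have lt1: "w a c < w a b" and lt2: "w c b < w a b" using wPhi abV cV by auto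
      have "(a,c) \<in> F\<^sup>*" using conF abO cV c(2) unfolding connected_on_def by blast
      from reach_remove_edge[OF this, of b] show False
      proof
        assume "(a,c) \<in> (F - {(a,b),(b,a)})\<^sup>*"
        then have "(c,a) \<in> (F - {(a,b),(b,a)})\<^sup>*" using sym_rtrancl_rev[OF symF0] by blast
        from exchange[OF treeF abF this _ wsym lt2] show False using noimp by blast
      next
        assume "(b,c) \<in> (F - {(a,b),(b,a)})\<^sup>*"
        then have "(c,b) \<in> (F - {(a,b),(b,a)})\<^sup>*" using sym_rtrancl_rev[OF symF0] by blast
        from exchange[OF treeF abF _ this wsym lt1] show False using noimp by blast
      qed
    qed
  qed
  show ?thesis using part1 part2 by blast
qed

end
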